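(* Let $d\ge2$ be an integer with prime factorisation $d=\prod_{i=1}^r p_i^{m_i}$ ($p_i$ distinct primes, $m_i\ge1$), and let $n\ge1$, $0\le k<n$. Then the number of $[[n,k]]_d$ stabilizer codes satisfies $$N(n,k,d)=\prod_{i=1}^r N(n,k,p_i^{m_i}),$$ and consequently $$N(n,k,d)=d^{\frac{(n-k)(n+3k+1)}{2}}\prod_{i=1}^r\zeta_i,\qquad \zeta_i:=\prod_{j=0}^{n-k-1}\frac{1-p_i^{-2(n-j)}}{1-p_i^{-(n-k-j)}}.$$
   Context: $N(n,k,q)$ denotes the number of $[[n,k]]_q$ stabilizer codes for qudits of dimension $q$ with configuration space $\mathbb{Z}_q$ (integers mod $q$). Definitions: $\Lambda=\begin{pmatrix}0&I_n\\-I_n&0\end{pmatrix}$; on $\mathbb{C}^q$ with basis $\{|j\rangle\}_{j\in\mathbb{Z}_q}$, $X|j\rangle=|j+1\rangle$, $Z|j\rangle=\omega^j|j\rangle$, $\omega=e^{2\pi i/q}$; the $n$-qudit Pauli group is generated by the $X_j,Z_j$ (and $e^{\pi i/q}I$ if $q$ even), each Pauli being a phase times $g(a)=X^{u_1}Z^{v_1}\otimes\cdots\otimes X^{u_n}Z^{v_n}$, $a=(u,v)\in\mathbb{Z}_q^{2n}$, with $g(a),g(b)$ commuting iff $a^T\Lambda b=0$. An $[[n,k]]_q$ stabilizer group is $S=\langle g_1,\dots,g_{n-k}\rangle$ of pairwise commuting Paulis each with eigenvalue $+1$ and $|S|=q^{n-k}$; its check matrix is $H=[a_1|\cdots|a_{n-k}]$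 with $g_j$ a phase times $g(a_j)$. Two stabilizer groups define the same stabilizer code iff their check matrices satisfy $H'=HA$ for some invertible $A$ over $\mathbb{Z}_q$; equivalently a code is the subgroup of $\mathbb{Z}_q^{2n}$ spanned by $n-k$ linearly independent (over $\mathbb{Z}_q$: $\sum x_ja_j=0\Rightarrow$ all $x_j=0$), pairwise symplectically orthogonal vectors. *)

theory Defs
  imports Complex_Main "HOL-Computational_Algebra.Primes"
begin

text \<open>Vectors of Z_q^{2n} are represented as functions nat => int whose
  coordinates 0..2n-1 lie in {0..<q} and which vanish elsewhere.
  Coordinates 0..n-1 are the u-part (X exponents), n..2n-1 the v-part (Z exponents).\<close>

definition zvec :: "int \<Rightarrow> nat \<Rightarrow> (nat \<Rightarrow> int) set" where
  "zvec q n = {a. (\<forall>i<2*n. 0 \<le> a i \<and> a i < q) \<and> (\<forall>i\<ge>2*n. a i = 0)}"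

text \<open>Symplectic form a^T Lambda b over Z_q, with Lambda = [[0,I],[-I,0]].\<close>
definition symp :: "int \<Rightarrow> nat \<Rightarrow> (nat \<Rightarrow> int) \<Rightarrow> (nat \<Rightarrow> int) \<Rightarrow> int" where
  "symp q n a b = (\<Sum>i<n. a i * b (n+i) - a (n+i) * b i) mod q"

definition lincomb :: "int \<Rightarrow> nat \<Rightarrow> nat \<Rightarrow> (nat \<Rightarrow> int) \<Rightarrow> (nat \<Rightarrow> nat \<Rightarrow> int) \<Rightarrow> (nat \<Rightarrow> int)" where
  "lincomb q n m x a = (\<lambda>i. if i < 2*n then (\<Sum>j<m. x j * a j i) mod q else 0)"

definition zspan :: "int \<Rightarrow> nat \<Rightarrow> nat \<Rightarrow> (nat \<Rightarrow> nat \<Rightarrow> int) \<Rightarrow> (nat \<Rightarrow> int) set" where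
  "zspan q n m a = {lincomb q n m x a | x. True}"

definition zindep :: "int \<Rightarrow> nat \<Rightarrow> nat \<Rightarrow> (nat \<Rightarrow> nat \<Rightarrow> int) \<Rightarrow> bool" where
  "zindep q n m a = (\<forall>x. lincomb q n m x a = (\<lambda>_. 0) \<longrightarrow> (\<forall>j<m. x j mod q = 0))"

definition stab_codes :: "nat \<Rightarrow> nat \<Rightarrow> int \<Rightarrow> (nat \<Rightarrow> int) set set" where
  "stab_codes n k q = {C. \<exists>a. (\<forall>j<n-k. a j \<in> zvec q n) \<and> zindep q n (n-k) a
      \<and> (\<forall>j<n-k. \<forall>l<n-k. symp q n (a j) (a l) = 0) \<and> C = zspan q n (n-k) a}"

definition Ncodes :: "nat \<Rightarrow> nat \<Rightarrow> nat \<Rightarrow> nat" where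
  "Ncodes n k q = card (stab_codes n k (int q))"

end

theory Submission
  imports Defs "HOL-Library.Real_Mod"
begin


definition nrm :: "int \<Rightarrow> nat \<Rightarrow> (nat \<Rightarrow> int) \<Rightarrow> nat \<Rightarrow> int" where
  "nrm q N f = (\<lambda>i. if i < N then f i mod q else 0)"
definition vecs :: "int \<Rightarrow> nat \<Rightarrow> (nat \<Rightarrow> int) set" where
  "vecs q N = {a. (\<forall>i<N. 0 \<le> a i \<and> a i < q) \<and> (\<forall>i\<ge>N. a i = 0)}"
definition sv :: "nat \<Rightarrow> int set \<Rightarrow> (nat \<Rightarrow> int) set" where
  "sv N S = {a. (\<forall>i<N. a i \<in> S) \<and> (\<forall>i\<ge>N. a i = 0)}"

lemma sv_Suc: "sv (Suc N) S = (\<lambda>(a,t). a(N:=t)) ` (sv N S \<times> S)"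
proof (rule set_eqI, rule iffI)
  fix b assume b: "b \<in> sv (Suc N) S"
  have "b = (\<lambda>(a,t). a(N:=t)) (b(N:=0), b N)" by auto
  moreover have "(b(N:=0), b N) \<in> sv N S \<times> S" using b unfolding sv_def by auto
  ultimately show "b \<in> (\<lambda>(a,t). a(N:=t)) ` (sv N S \<times> S)" by blast
next
  fix b assume "b \<in> (\<lambda>(a,t). a(N:=t)) ` (sv N S \<times> S)"
  then show "b \<in> sv (Suc N) S" unfolding sv_def by (auto simp: less_Suc_eq)
qed

lemma sv_card: assumes "finite S" shows "finite (sv N S) \<and> card (sv N S) = card S ^ N"
proof (induction N)
  case 0
  have "sv 0 S = {\<lambda>_. 0}" unfolding sv_def by auto
  then show ?case by simp
next
  case (Suc N)
  have inj: "inj_on (\<lambda>(a,t). a(N:=t)) (sv N S \<times> S)"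
  proof (rule inj_onI, clarsimp)
    fix a t a' t' assume "a \<in> sv N S" "a' \<in> sv N S" "a(N := t) = a'(N := t')"
    then show "a = a' \<and> t = t'" unfolding sv_def
      by (auto simp: fun_eq_iff) (metis order_refl)+
  qed
  show ?case unfolding sv_Suc using Suc inj assms
    by (simp add: card_image card_cartesian_product)
qed

lemma vecs_sv: "vecs q N = sv N {0..<q}" unfolding vecs_def sv_def by auto

lemma vecs_card: "finite (vecs q N)" "card (vecs q N) = nat q ^ N"
  using sv_card[of "{0..<q}" N] by (auto simp: vecs_sv)

lemma nrm_in: "q > 0 \<Longrightarrow> nrm q N f \<in> vecs q N"
  unfolding nrm_def vecs_def by auto
lemma nrm_id: "v \<in> vecs q N \<Longrightarrow> nrm q N v = v"
  unfolding nrm_def vecs_def by (auto intro!: ext)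
lemma nrm_eq: "nrm q N f = nrm q N g \<longleftrightarrow> (\<forall>i<N. f i mod q = g i mod q)"
  unfolding nrm_def by (auto simp: fun_eq_iff)
lemma nrm_zero: "nrm q N f = (\<lambda>_. 0) \<longleftrightarrow> (\<forall>i<N. f i mod q = 0)"
  unfolding nrm_def by (auto simp: fun_eq_iff)
lemma nrm_app: "i < N \<Longrightarrow> nrm q N f i = f i mod q"
  unfolding nrm_def by auto
lemma vecs_zero: "v \<in> vecs q N \<Longrightarrow> v = (\<lambda>_. 0) \<longleftrightarrow> (\<forall>i<N. v i mod q = 0)"
  by (metis nrm_id nrm_zero)
lemma vecs_eq: "u \<in> vecs q N \<Longrightarrow> v \<in> vecs q N \<Longrightarrow> u = v \<longleftrightarrow> (\<forall>i<N. u i mod q = v i mod q)"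
  by (metis nrm_id nrm_eq)



definition ad :: "int \<Rightarrow> nat \<Rightarrow> (nat \<Rightarrow> int) \<Rightarrow> (nat \<Rightarrow> int) \<Rightarrow> nat \<Rightarrow> int" where
  "ad q N u v = nrm q N (\<lambda>i. u i + v i)"
definition sc :: "int \<Rightarrow> nat \<Rightarrow> int \<Rightarrow> (nat \<Rightarrow> int) \<Rightarrow> nat \<Rightarrow> int" where
  "sc q N c v = nrm q N (\<lambda>i. c * v i)"
abbreviation z0 :: "nat \<Rightarrow> int" where "z0 \<equiv> (\<lambda>_. 0)"
definition sub :: "int \<Rightarrow> nat \<Rightarrow> (nat \<Rightarrow> int) set \<Rightarrow> bool" where
  "sub q N G \<longleftrightarrow> G \<subseteq> vecs q N \<and> z0 \<in> G \<and> (\<forall>u\<in>G. \<forall>v\<in>G. ad q N u v \<in> G)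
     \<and> (\<forall>c. \<forall>v\<in>G. sc q N c v \<in> G)"
definition hom :: "int \<Rightarrow> nat \<Rightarrow> nat \<Rightarrow> (nat \<Rightarrow> int) set \<Rightarrow> ((nat \<Rightarrow> int) \<Rightarrow> (nat \<Rightarrow> int)) \<Rightarrow> bool" where
  "hom q N M G f \<longleftrightarrow> (\<forall>v\<in>G. f v \<in> vecs q M) \<and> (\<forall>u\<in>G. \<forall>v\<in>G. f (ad q N u v) = ad q M (f u) (f v))
     \<and> (\<forall>c. \<forall>v\<in>G. f (sc q N c v) = sc q M c (f v))"

lemma ad_app: "i < N \<Longrightarrow> ad q N u v i = (u i + v i) mod q"
  unfolding ad_def by (simp add: nrm_app)
lemma sc_app: "i < N \<Longrightarrow> sc q N c v i = (c * v i) mod q"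
  unfolding sc_def by (simp add: nrm_app)
lemma ad_in: "q > 0 \<Longrightarrow> ad q N u v \<in> vecs q N" unfolding ad_def by (rule nrm_in)
lemma sc_in: "q > 0 \<Longrightarrow> sc q N c v \<in> vecs q N" unfolding sc_def by (rule nrm_in)
lemma z0_vecs: "q > 0 \<Longrightarrow> z0 \<in> vecs q N" unfolding vecs_def by auto

lemma vecs_finite_sub: "sub q N G \<Longrightarrow> finite G"
  unfolding sub_def using vecs_card(1) finite_subset by blast

lemma sub_vecs: "q > 0 \<Longrightarrow> sub q N (vecs q N)"
  unfolding sub_def using ad_in sc_in z0_vecs by blast

lemma hom_card:
  assumes q: "q > 0" and G: "sub q N G" and f: "hom q N M G f"
  shows "card G = card {v\<in>G. f v = z0} * card (f ` G)"
proof -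
  let ?K = "{v\<in>G. f v = z0}"
  have fin: "finite G" using G by (rule vecs_finite_sub)
  have Gv: "G \<subseteq> vecs q N" using G unfolding sub_def by auto
  have fib: "card {v\<in>G. f v = t} = card ?K" if t: "t \<in> f ` G" for t
  proof -
    obtain v0 where v0: "v0 \<in> G" "t = f v0" using t by auto
    have "{v\<in>G. f v = t} = ad q N v0 ` ?K"
    proof (rule set_eqI, rule iffI)
      fix v assume v: "v \<in> {v\<in>G. f v = t}"
      define k where "k = ad q N v (sc q N (-1) v0)"
      have kG: "k \<in> G" using G v v0 unfolding k_def sub_def by auto
      have tv: "t \<in> vecs q M" using f v0 unfolding hom_def by auto
      have "f k = ad q M t (sc q M (-1) t)"
        using f v v0 G unfolding k_def hom_def sub_def by auto
      also have "\<dots> = z0" using tv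
        by (subst vecs_zero[OF ad_in[OF q]]) (simp add: ad_app sc_app mod_add_right_eq)
      finally have kK: "k \<in> ?K" using kG by auto
      have "ad q N v0 k = v"
        using Gv v v0 by (subst vecs_eq[OF ad_in[OF q]]) (auto simp: k_def ad_app sc_app mod_add_right_eq)
      then show "v \<in> ad q N v0 ` ?K" using kK by force
    next
      fix v assume "v \<in> ad q N v0 ` ?K"
      then obtain k where k: "k \<in> ?K" "v = ad q N v0 k" by auto
      have "f v = ad q M t z0" using k f v0 unfolding hom_def by auto
      also have "\<dots> = t" using f v0 unfolding hom_def
        by (subst vecs_eq[OF ad_in[OF q]]) (auto simp: ad_app)
      finally show "v \<in> {v\<in>G. f v = t}" using k v0 G unfolding sub_def by auto
    qed
    moreover have "inj_on (ad q N v0) ?K"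
    proof (rule inj_onI)
      fix k k' assume kk: "k \<in> ?K" "k' \<in> ?K" "ad q N v0 k = ad q N v0 k'"
      have "\<forall>i<N. k i mod q = k' i mod q"
      proof (intro allI impI)
        fix i assume i: "i < N"
        have "(v0 i + k i) mod q = (v0 i + k' i) mod q" using kk(3) i
          by (metis ad_app)
        then have "(v0 i + k i - v0 i) mod q = (v0 i + k' i - v0 i) mod q"
          by (rule mod_diff_cong) simp
        then show "k i mod q = k' i mod q" by simp
      qed
      then show "k = k'" using kk Gv by (subst vecs_eq) auto
    qed
    ultimately show ?thesis by (simp add: card_image)
  qed
  have "G = (\<Union>t\<in>f ` G. {v\<in>G. f v = t})" by auto
  moreover have "card (\<Union>t\<in>f ` G. {v\<in>G. f v = t}) = (\<Sum>t\<in>f ` G. card {v\<in>G. f v = t})"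
    using fin by (intro card_UN_disjoint) auto
  ultimately have "card G = (\<Sum>t\<in>f ` G. card {v\<in>G. f v = t})" by simp
  also have "\<dots> = (\<Sum>t\<in>f ` G. card ?K)" using fib by simp
  finally show ?thesis by simp
qed



definition tor :: "int \<Rightarrow> nat \<Rightarrow> int \<Rightarrow> (nat \<Rightarrow> int) set \<Rightarrow> (nat \<Rightarrow> int) set" where
  "tor q N c G = {v\<in>G. sc q N c v = z0}"
definition full :: "int \<Rightarrow> nat \<Rightarrow> (nat \<Rightarrow> int) set \<Rightarrow> (nat \<Rightarrow> int) set" where
  "full q N G = {v\<in>G. \<forall>x. sc q N x v = z0 \<longrightarrow> q dvd x}"

lemma sc_z0_iff: "sc q N c v = z0 \<longleftrightarrow> (\<forall>i<N. q dvd c * v i)"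
  unfolding sc_def nrm_zero by (simp add: dvd_eq_mod_eq_0)

lemma sc_z0_mult: "sc q N a v = z0 \<Longrightarrow> sc q N (a * b) v = z0"
  unfolding sc_z0_iff by (metis dvd_mult2 mult.assoc mult.commute)

lemma sc_z0_dvd: "sc q N a v = z0 \<Longrightarrow> a dvd b \<Longrightarrow> sc q N b v = z0"
  by (metis dvdE sc_z0_mult)

lemma sc_z0_comb: "sc q N a v = z0 \<Longrightarrow> sc q N b v = z0 \<Longrightarrow> sc q N (u * a + w * b) v = z0"
  unfolding sc_z0_iff by (simp add: distrib_right mult.assoc)

lemma sc_z0_gcd: "sc q N a v = z0 \<Longrightarrow> sc q N b v = z0 \<Longrightarrow> sc q N (gcd a b) v = z0"
  by (metis bezout_int sc_z0_comb)

lemma sc_q: "sc q N q v = z0" unfolding sc_z0_iff by simp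

lemma IE:
  fixes Q :: nat and r :: nat
  assumes G: "sub (int Q) N G" and Q: "Q > 0"
    and T: "\<And>c. c dvd Q \<Longrightarrow> card (tor (int Q) N (int c) G) = c ^ r"
  shows "finite S \<Longrightarrow> c dvd Q \<Longrightarrow> (\<forall>p\<in>S. prime p \<and> p dvd c) \<Longrightarrow>
    real (card {v \<in> tor (int Q) N (int c) G. \<forall>p\<in>S. sc (int Q) N (int (c div p)) v \<noteq> z0})
     = real c ^ r * (\<Prod>p\<in>S. (1 - 1 / real p ^ r))"
proof (induction S arbitrary: c rule: finite_induct)
  case empty
  then show ?case using T by simp
next
  case (insert p S)
  let ?q = "int Q"
  let ?A = "\<lambda>c S. {v \<in> tor ?q N (int c) G. \<forall>p\<in>S. sc ?q N (int (c div p)) v \<noteq> z0}"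
  have fin: "finite (?A c S)" using vecs_finite_sub[OF G] unfolding tor_def by auto
  have p: "prime p" "p dvd c" using insert by auto
  have cpc: "c = p * (c div p)" using p by simp
  have "c div p dvd c" by (metis cpc dvd_triv_right)
  then have cp: "c div p dvd Q" using insert(4) dvd_trans by blast
  have Sdiv: "\<forall>p'\<in>S. prime p' \<and> p' dvd c div p"
  proof
    fix p' assume p': "p' \<in> S"
    have pp': "p' \<noteq> p" using insert(2) p' by auto
    have pr: "prime p'" "p' dvd c" using insert(5) p' by auto
    have cop: "coprime p' p" using primes_coprime[OF pr(1) p(1) pp'] .
    have "p' dvd p * (c div p)" using pr(2) cpc by simp
    then have "p' dvd c div p" using coprime_dvd_mult_right_iff[OF cop] by blast
    then show "prime p' \<and> p' dvd c div p" using pr by simp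
  qed
  have cm: "c = p * p' * (c div p div p')" "c div p = p' * (c div p div p')"
     "c div p' = p * (c div p div p')" if p': "p' \<in> S" for p'
  proof -
    have pr: "prime p'" "p' dvd c div p" using Sdiv p' by auto
    have e1: "c div p = p' * (c div p div p')" using pr by simp
    have e0: "c = p * p' * (c div p div p')" using e1 cpc by (simp add: mult.assoc)
    have "c = p' * (p * (c div p div p'))" using e0 by (simp add: ac_simps)
    then have e2: "c div p' = p * (c div p div p')" using pr prime_gt_0_nat
      by (metis nonzero_mult_div_cancel_left not_gr0)
    show "c = p * p' * (c div p div p')" "c div p = p' * (c div p div p')"
     "c div p' = p * (c div p div p')" using e0 e1 e2 by auto
  qed
  have B: "{v \<in> ?A c S. sc ?q N (int (c div p)) v = z0} = ?A (c div p) S"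
  proof (rule set_eqI, rule iffI)
    fix v assume v: "v \<in> {v \<in> ?A c S. sc ?q N (int (c div p)) v = z0}"
    have "sc ?q N (int (c div p div p')) v \<noteq> z0" if p': "p' \<in> S" for p'
    proof
      assume z: "sc ?q N (int (c div p div p')) v = z0"
      have "int (c div p') = int (c div p div p') * int p"
        using cm(3)[OF p'] by simp
      then have "sc ?q N (int (c div p')) v = z0" using sc_z0_mult[OF z] by simp
      then show False using v p' by auto
    qed
    then show "v \<in> ?A (c div p) S" using v unfolding tor_def by auto
  next
    fix v assume v: "v \<in> ?A (c div p) S"
    have z: "sc ?q N (int (c div p)) v = z0" using v unfolding tor_def by auto
    have "int c = int (c div p) * int p" using cpc by (metis mult.commute of_nat_mult)
    then have zc: "sc ?q N (int c) v = z0" using sc_z0_mult[OF z] by simp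
    have "sc ?q N (int (c div p')) v \<noteq> z0" if p': "p' \<in> S" for p'
    proof
      assume z': "sc ?q N (int (c div p')) v = z0"
      define m where "m = c div p div p'"
      have pp': "p' \<noteq> p" using insert(2) p' by auto
      have pr': "prime p'" "p' dvd c div p" using Sdiv p' by auto
      have e1: "c div p = p' * m" "c div p' = p * m" using cm[OF p'] unfolding m_def by auto
      have "coprime (int p) (int p')" using primes_coprime[OF p(1) pr'(1)] pp' by auto
      then obtain u w where uw: "u * int p + w * int p' = 1"
        by (metis bezout_int coprime_iff_gcd_eq_1)
      have "u * int (c div p') + w * int (c div p) = (u * int p + w * int p') * int m"
        using e1 by (simp add: algebra_simps)
      then have "int m = u * int (c div p') + w * int (c div p)" using uw by simp
      then have "sc ?q N (int m) v = z0" using sc_z0_comb[OF z' z] by simp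
      then show False using v p' unfolding m_def by auto
    qed
    then show "v \<in> {v \<in> ?A c S. sc ?q N (int (c div p)) v = z0}"
      using v z zc unfolding tor_def by auto
  qed
  have split: "?A c (insert p S) = ?A c S - {v \<in> ?A c S. sc ?q N (int (c div p)) v = z0}" by auto
  let ?B = "{v \<in> ?A c S. sc ?q N (int (c div p)) v = z0}"
  have Bs: "?B \<subseteq> ?A c S" by blast
  have finB: "finite ?B" using fin Bs finite_subset by blast
  have le: "card ?B \<le> card (?A c S)" by (rule card_mono[OF fin Bs])
  have "card (?A c (insert p S)) = card (?A c S) - card ?B"
    unfolding split by (rule card_Diff_subset[OF finB Bs])
  then have "real (card (?A c (insert p S))) = real (card (?A c S)) - real (card ?B)"
    using le by (simp add: of_nat_diff)
  then have "real (card (?A c (insert p S))) = real (card (?A c S)) - real (card (?A (c div p) S))"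
    unfolding B .
  also have "\<dots> = real c ^ r * (\<Prod>p\<in>S. (1 - 1 / real p ^ r)) - real (c div p) ^ r * (\<Prod>p\<in>S. (1 - 1 / real p ^ r))"
    using insert.IH[of c] insert.IH[of "c div p"] insert(4,5) cp Sdiv by auto
  also have "real (c div p) = real c / real p" using p by (simp add: real_of_nat_div)
  also have "real c ^ r * (\<Prod>p\<in>S. (1 - 1 / real p ^ r)) - (real c / real p) ^ r * (\<Prod>p\<in>S. (1 - 1 / real p ^ r))
     = real c ^ r * (\<Prod>p\<in>insert p S. (1 - 1 / real p ^ r))"
    using insert(1,2) by (simp add: power_divide algebra_simps)
  finally show ?case .
qed

lemma full_char:
  fixes Q :: nat
  assumes G: "sub (int Q) N G" and Q: "Q > 0"
  shows "full (int Q) N G = {v \<in> tor (int Q) N (int Q) G. \<forall>p\<in>prime_factors Q. sc (int Q) N (int (Q div p)) v \<noteq> z0}"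
proof (rule set_eqI, rule iffI)
  fix v assume v: "v \<in> full (int Q) N G"
  have "sc (int Q) N (int (Q div p)) v \<noteq> z0" if p: "p \<in> prime_factors Q" for p
  proof
    assume "sc (int Q) N (int (Q div p)) v = z0"
    then have "int Q dvd int (Q div p)" using v unfolding full_def by auto
    then have "Q dvd Q div p" by simp
    moreover have "Q div p < Q" using p Q
      by (intro div_less_dividend) (auto simp: in_prime_factors_iff prime_gt_Suc_0_nat)
    moreover have "Q div p > 0" using p Q
      by (simp add: in_prime_factors_iff div_greater_zero_iff dvd_imp_le prime_gt_0_nat)
    ultimately show False by (simp add: nat_dvd_not_less)
  qed
  then show "v \<in> {v \<in> tor (int Q) N (int Q) G. \<forall>p\<in>prime_factors Q. sc (int Q) N (int (Q div p)) v \<noteq> z0}"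
    using v sc_q unfolding full_def tor_def by auto
next
  fix v assume v: "v \<in> {v \<in> tor (int Q) N (int Q) G. \<forall>p\<in>prime_factors Q. sc (int Q) N (int (Q div p)) v \<noteq> z0}"
  have "int Q dvd x" if x: "sc (int Q) N x v = z0" for x
  proof (rule ccontr)
    assume nd: "\<not> int Q dvd x"
    define g where "g = gcd x (int Q)"
    have gz: "sc (int Q) N g v = z0" unfolding g_def by (rule sc_z0_gcd[OF x sc_q])
    have g0: "g > 0" unfolding g_def using Q by simp
    have gd: "g dvd int Q" unfolding g_def by simp
    have gne: "g \<noteq> int Q" using nd unfolding g_def by (metis gcd_dvd1)
    define g' where "g' = nat g"
    have gg: "int g' = g" using g0 unfolding g'_def by simp
    have "int g' dvd int Q" using gd gg by simp
    then have g'd: "g' dvd Q" by simp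
    have g'ne: "g' \<noteq> Q" using gne gg by auto
    have Qg: "Q = g' * (Q div g')" using g'd by simp
    have "Q div g' \<noteq> 1"
    proof
      assume "Q div g' = 1"
      then have "Q = g'" using Qg by simp
      then show False using g'ne by simp
    qed
    then obtain p where p: "prime p" "p dvd Q div g'" using prime_factor_nat by blast
    have "Q div g' dvd Q" using Qg by (metis dvd_triv_right)
    then have "p dvd Q" using p(2) dvd_trans by blast
    then have pQ: "p \<in> prime_factors Q" using p Q by (simp add: in_prime_factors_iff)
    have "g' dvd Q div p"
    proof -
      obtain t where t: "Q div g' = p * t" using p by (auto elim: dvdE)
      have "Q = p * (g' * t)" using t Qg by simp
      then have "Q div p = g' * t" using p by (simp add: prime_gt_0_nat)
      then show ?thesis by simp
    qed
    then have "int g' dvd int (Q div p)" by simp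
    then have "g dvd int (Q div p)" using gg by simp
    then have "sc (int Q) N (int (Q div p)) v = z0" using sc_z0_dvd[OF gz] by blast
    then show False using v pQ by auto
  qed
  then show "v \<in> full (int Q) N G" using v unfolding full_def tor_def by auto
qed

lemma full_card:
  fixes Q :: nat and r :: nat
  assumes G: "sub (int Q) N G" and Q: "Q > 0"
    and T: "\<And>c. c dvd Q \<Longrightarrow> card (tor (int Q) N (int c) G) = c ^ r"
  shows "real (card (full (int Q) N G)) = real Q ^ r * (\<Prod>p\<in>prime_factors Q. (1 - 1 / real p ^ r))"
  unfolding full_char[OF G Q]
  by (rule IE[OF G Q T]) (auto simp: in_prime_factors_iff)



definition ee :: "int \<Rightarrow> int \<Rightarrow> complex" where
  "ee q t = cis (2 * pi * real_of_int t / real_of_int q)"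

lemma ee_add: "ee q (s + t) = ee q s * ee q t"
  unfolding ee_def by (simp add: cis_mult add_divide_distrib distrib_left)

lemma ee_one_iff: assumes "q > 0" shows "ee q t = 1 \<longleftrightarrow> q dvd t"
proof
  assume "ee q t = 1"
  then obtain n where n: "2 * pi * real_of_int t / real_of_int q = of_int n * (2 * pi)"
    unfolding ee_def cis_eq_1_iff by blast
  then have "real_of_int t = real_of_int n * real_of_int q" using assms
    by (simp add: field_simps)
  then have "t = n * q" by (metis of_int_eq_iff of_int_mult)
  then show "q dvd t" by simp
next
  assume "q dvd t"
  then obtain n where "t = q * n" by (auto elim: dvdE)
  then have "2 * pi * real_of_int t / real_of_int q = 2 * pi * real_of_int n" using assms by simp
  then show "ee q t = 1" unfolding ee_def by simp
qed

lemma ee_mod: assumes "q > 0" and "s mod q = t mod q" shows "ee q s = ee q t"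
proof -
  have "q dvd s - t" using assms by (simp add: mod_eq_dvd_iff)
  then have "ee q (s - t) = 1" using ee_one_iff[OF assms(1)] by simp
  then show ?thesis using ee_add[of q "s - t" t] by simp
qed

lemma ad_cancel: "q > 0 \<Longrightarrow> v0 \<in> vecs q N \<Longrightarrow> v \<in> vecs q N \<Longrightarrow> ad q N v0 (ad q N v (sc q N (-1) v0)) = v"
  by (subst vecs_eq[OF ad_in]) (auto simp: ad_app sc_app mod_add_right_eq)

lemma ad_inj: assumes "k \<in> vecs q N" "k' \<in> vecs q N" "ad q N u k = ad q N u k'" shows "k = k'"
proof -
  have "\<forall>i<N. k i mod q = k' i mod q"
  proof (intro allI impI)
    fix i assume i: "i < N"
    have "(u i + k i) mod q = (u i + k' i) mod q" using assms(3) i by (metis ad_app)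
    then have "(u i + k i - u i) mod q = (u i + k' i - u i) mod q"
      by (rule mod_diff_cong) simp
    then show "k i mod q = k' i mod q" by simp
  qed
  then show "k = k'" using assms by (subst vecs_eq) auto
qed

lemma ad_image: assumes q: "q > 0" and G: "sub q N G" and g0: "g0 \<in> G" shows "ad q N g0 ` G = G"
proof
  show "ad q N g0 ` G \<subseteq> G" using G g0 unfolding sub_def by auto
  show "G \<subseteq> ad q N g0 ` G"
  proof
    fix v assume v: "v \<in> G"
    have "ad q N v (sc q N (-1) g0) \<in> G" using G g0 v unfolding sub_def by auto
    moreover have "ad q N g0 (ad q N v (sc q N (-1) g0)) = v"
      using ad_cancel[OF q] G g0 v unfolding sub_def by auto
    ultimately show "v \<in> ad q N g0 ` G" by (metis image_eqI)
  qed
qed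

lemma pr_ad_mod: "(\<Sum>i<M. ad q M u v i * w i) mod q = (\<Sum>i<M. u i * w i + v i * w i) mod q"
proof -
  have e: "(\<Sum>i<M. (ad q M u v i * w i) mod q) = (\<Sum>i<M. ((u i + v i) * w i) mod q)"
  proof (rule sum.cong[OF refl])
    fix i assume "i \<in> {..<M}"
    then have "ad q M u v i = (u i + v i) mod q" by (simp add: ad_app)
    then show "(ad q M u v i * w i) mod q = ((u i + v i) * w i) mod q" by (simp add: mod_mult_left_eq)
  qed
  have "(\<Sum>i<M. ad q M u v i * w i) mod q = (\<Sum>i<M. (ad q M u v i * w i) mod q) mod q"
    by (simp add: mod_sum_eq)
  also have "\<dots> = (\<Sum>i<M. ((u i + v i) * w i) mod q) mod q" unfolding e ..
  also have "\<dots> = (\<Sum>i<M. u i * w i + v i * w i) mod q"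
    by (simp add: mod_sum_eq distrib_right)
  finally show ?thesis .
qed

lemma char_sum:
  assumes q: "q > 0" and G: "sub q M G"
  shows "(\<Sum>g\<in>G. ee q (\<Sum>i<M. g i * w i)) = (if \<forall>g\<in>G. q dvd (\<Sum>i<M. g i * w i) then of_nat (card G) else 0)"
proof (cases "\<forall>g\<in>G. q dvd (\<Sum>i<M. g i * w i)")
  case True
  then have "(\<Sum>g\<in>G. ee q (\<Sum>i<M. g i * w i)) = (\<Sum>g\<in>G. 1)"
    using ee_one_iff[OF q] by (intro sum.cong) auto
  then show ?thesis using True by simp
next
  case False
  then obtain g0 where g0: "g0 \<in> G" "\<not> q dvd (\<Sum>i<M. g0 i * w i)" by auto
  let ?S = "(\<Sum>g\<in>G. ee q (\<Sum>i<M. g i * w i))"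
  have Gv: "G \<subseteq> vecs q M" using G unfolding sub_def by auto
  have inj: "inj_on (ad q M g0) G" using ad_inj Gv by (meson inj_onI subsetD)
  have "?S = (\<Sum>g\<in>ad q M g0 ` G. ee q (\<Sum>i<M. g i * w i))" using ad_image[OF q G g0(1)] by simp
  also have "\<dots> = (\<Sum>g\<in>G. ee q (\<Sum>i<M. ad q M g0 g i * w i))"
    by (subst sum.reindex[OF inj]) simp
  also have "\<dots> = (\<Sum>g\<in>G. ee q (\<Sum>i<M. g0 i * w i) * ee q (\<Sum>i<M. g i * w i))"
  proof (intro sum.cong refl)
    fix g assume "g \<in> G"
    have "ee q (\<Sum>i<M. ad q M g0 g i * w i) = ee q ((\<Sum>i<M. g0 i * w i) + (\<Sum>i<M. g i * w i))"
      by (rule ee_mod[OF q]) (simp add: pr_ad_mod sum.distrib)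
    then show "ee q (\<Sum>i<M. ad q M g0 g i * w i) = ee q (\<Sum>i<M. g0 i * w i) * ee q (\<Sum>i<M. g i * w i)"
      by (simp add: ee_add)
  qed
  also have "\<dots> = ee q (\<Sum>i<M. g0 i * w i) * ?S" by (simp add: sum_distrib_left)
  finally have "(1 - ee q (\<Sum>i<M. g0 i * w i)) * ?S = 0" by (simp add: algebra_simps)
  moreover have "ee q (\<Sum>i<M. g0 i * w i) \<noteq> 1" using g0(2) ee_one_iff[OF q] by simp
  ultimately have "?S = 0" by simp
  then show ?thesis by (subst if_not_P[OF False])
qed



definition mat :: "int \<Rightarrow> nat \<Rightarrow> nat \<Rightarrow> (nat \<Rightarrow> nat \<Rightarrow> int) \<Rightarrow> (nat \<Rightarrow> int) \<Rightarrow> nat \<Rightarrow> int" where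
  "mat q N m A y = nrm q m (\<lambda>l. \<Sum>i<N. A l i * y i)"
definition lin :: "int \<Rightarrow> nat \<Rightarrow> nat \<Rightarrow> (nat \<Rightarrow> int) \<Rightarrow> (nat \<Rightarrow> nat \<Rightarrow> int) \<Rightarrow> nat \<Rightarrow> int" where
  "lin q N m x a = nrm q N (\<lambda>i. \<Sum>j<m. x j * a j i)"
definition indep :: "int \<Rightarrow> nat \<Rightarrow> nat \<Rightarrow> (nat \<Rightarrow> nat \<Rightarrow> int) \<Rightarrow> bool" where
  "indep q N m a \<longleftrightarrow> (\<forall>x. lin q N m x a = z0 \<longrightarrow> (\<forall>j<m. x j mod q = 0))"
definition uv :: "nat \<Rightarrow> nat \<Rightarrow> int" where "uv i = (\<lambda>t. if t = i then 1 else 0)"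

lemma sum_mod_cong: fixes f g :: "'a \<Rightarrow> int" assumes "\<And>i. i \<in> I \<Longrightarrow> f i mod q = g i mod q"
  shows "(\<Sum>i\<in>I. f i) mod q = (\<Sum>i\<in>I. g i) mod q"
proof -
  have "(\<Sum>i\<in>I. f i mod q) = (\<Sum>i\<in>I. g i mod q)" using assms by (rule sum.cong[OF refl])
  then have "(\<Sum>i\<in>I. f i mod q) mod q = (\<Sum>i\<in>I. g i mod q) mod q" by simp
  then show ?thesis unfolding mod_sum_eq .
qed

lemma uv_vecs: "q > 1 \<Longrightarrow> i < N \<Longrightarrow> uv i \<in> vecs q N" unfolding uv_def vecs_def by auto

lemma sum_uv: "i < N \<Longrightarrow> (\<Sum>t<N. f t * uv i t) = f i"
  unfolding uv_def by (simp add: if_distrib cong: if_cong)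

lemma mat_in: "q > 0 \<Longrightarrow> mat q N m A y \<in> vecs q m" unfolding mat_def by (rule nrm_in)

lemma mat_ad: "mat q N m A (ad q N u v) = ad q m (mat q N m A u) (mat q N m A v)"
proof -
  have "(\<Sum>i<N. A l i * ad q N u v i) mod q = ((\<Sum>i<N. A l i * u i) mod q + (\<Sum>i<N. A l i * v i) mod q) mod q" for l
  proof -
    have "(\<Sum>i<N. A l i * ad q N u v i) mod q = (\<Sum>i<N. A l i * u i + A l i * v i) mod q"
      by (rule sum_mod_cong) (simp add: ad_app mod_mult_right_eq distrib_left)
    then show ?thesis by (simp add: sum.distrib mod_add_eq)
  qed
  then show ?thesis unfolding mat_def ad_def nrm_eq by (simp add: nrm_app)
qed

lemma mat_sc: "mat q N m A (sc q N c v) = sc q m c (mat q N m A v)"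
proof -
  have "(\<Sum>i<N. A l i * sc q N c v i) mod q = (c * ((\<Sum>i<N. A l i * v i) mod q)) mod q" for l
  proof -
    have "(\<Sum>i<N. A l i * sc q N c v i) mod q = (\<Sum>i<N. c * (A l i * v i)) mod q"
      by (rule sum_mod_cong) (simp add: sc_app mod_mult_right_eq ac_simps)
    then show ?thesis by (simp add: sum_distrib_left[symmetric] mod_mult_right_eq)
  qed
  then show ?thesis unfolding mat_def sc_def nrm_eq by (simp add: nrm_app)
qed

lemma mat_z0: "mat q N m A z0 = z0" unfolding mat_def nrm_zero by simp

lemma mat_uv: "i < N \<Longrightarrow> l < m \<Longrightarrow> mat q N m A (uv i) l = A l i mod q"
  unfolding mat_def by (simp add: nrm_app sum_uv)

lemma mat_hom: "q > 0 \<Longrightarrow> hom q N m G (mat q N m A)"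
  unfolding hom_def using mat_in mat_ad mat_sc by blast

lemma mat_image_sub: assumes q: "q > 0" and G: "sub q N G" shows "sub q m (mat q N m A ` G)"
  using G mat_in[OF q] mat_ad mat_sc mat_z0 unfolding sub_def
  by (auto simp: image_iff) (metis mat_z0)+

lemma duality:
  assumes q: "q > 1" and ind: "indep q N m a"
  shows "mat q N m a ` vecs q N = vecs q m"
proof -
  have q0: "q > 0" using q by simp
  let ?I = "mat q N m a ` vecs q N"
  have Isub: "sub q m ?I" by (rule mat_image_sub[OF q0 sub_vecs[OF q0]])
  have Iv: "?I \<subseteq> vecs q m" using Isub unfolding sub_def by auto
  have finI: "finite ?I" using Isub by (rule vecs_finite_sub)
  let ?X = "(\<Sum>z\<in>vecs q m. \<Sum>g\<in>?I. ee q (\<Sum>l<m. g l * z l))"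
  have perp: "z = z0" if z: "z \<in> vecs q m" and P: "\<forall>g\<in>?I. q dvd (\<Sum>l<m. g l * z l)" for z
  proof -
    have "lin q N m z a = z0" unfolding lin_def nrm_zero
    proof (intro allI impI)
      fix i assume i: "i < N"
      have "q dvd (\<Sum>l<m. mat q N m a (uv i) l * z l)" using P uv_vecs[OF q i] by auto
      moreover have "(\<Sum>l<m. mat q N m a (uv i) l * z l) mod q = (\<Sum>l<m. z l * a l i) mod q"
      proof (rule sum_mod_cong)
        fix l assume "l \<in> {..<m}"
        then have "mat q N m a (uv i) l = a l i mod q" using mat_uv i by simp
        then have "(mat q N m a (uv i) l * z l) mod q = (a l i * z l) mod q" by (simp add: mod_mult_left_eq)
        then show "(mat q N m a (uv i) l * z l) mod q = (z l * a l i) mod q" by (simp add: mult.commute)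
      qed
      ultimately show "(\<Sum>l<m. z l * a l i) mod q = 0" by (simp add: dvd_eq_mod_eq_0)
    qed
    then have "\<forall>l<m. z l mod q = 0" using ind unfolding indep_def by blast
    then show "z = z0" using z vecs_zero by blast
  qed
  have "?X = (\<Sum>z\<in>vecs q m. if \<forall>g\<in>?I. q dvd (\<Sum>l<m. g l * z l) then of_nat (card ?I) else 0)"
    by (intro sum.cong refl char_sum[OF q0 Isub])
  also have "\<dots> = (\<Sum>z\<in>vecs q m. if z = z0 then of_nat (card ?I) else 0)"
  proof (intro sum.cong refl)
    fix z assume z: "z \<in> vecs q m"
    have "\<forall>g\<in>?I. q dvd (\<Sum>l<m. g l * z0 l)" by simp
    then show "(if \<forall>g\<in>?I. q dvd (\<Sum>l<m. g l * z l) then of_nat (card ?I) else (0::complex)) =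
      (if z = z0 then of_nat (card ?I) else 0)"
    proof (cases "z = z0")
      case True
      then show ?thesis using \<open>\<forall>g\<in>?I. q dvd (\<Sum>l<m. g l * z0 l)\<close> by simp
    next
      case False
      then have "\<not> (\<forall>g\<in>?I. q dvd (\<Sum>l<m. g l * z l))" using perp[OF z] by blast
      then show ?thesis using False by (simp only: if_False)
    qed
  qed
  also have "\<dots> = of_nat (card ?I)" using z0_vecs[OF q0] vecs_card(1) by simp
  finally have X1: "?X = of_nat (card ?I)" .
  have "?X = (\<Sum>g\<in>?I. \<Sum>z\<in>vecs q m. ee q (\<Sum>l<m. g l * z l))"
    by (rule sum.swap)
  also have "\<dots> = (\<Sum>g\<in>?I. \<Sum>z\<in>vecs q m. ee q (\<Sum>l<m. z l * g l))"
    by (simp only: mult.commute)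
  also have "\<dots> = (\<Sum>g\<in>?I. if \<forall>z\<in>vecs q m. q dvd (\<Sum>l<m. z l * g l) then of_nat (card (vecs q m)) else 0)"
    by (intro sum.cong refl char_sum[OF q0 sub_vecs[OF q0]])
  also have "\<dots> = (\<Sum>g\<in>?I. if g = z0 then of_nat (card (vecs q m)) else 0)"
  proof (intro sum.cong refl)
    fix g assume g: "g \<in> ?I"
    have "g = z0" if P: "\<forall>z\<in>vecs q m. q dvd (\<Sum>l<m. z l * g l)"
    proof -
      have "\<forall>l<m. g l mod q = 0"
      proof (intro allI impI)
        fix l assume l: "l < m"
        have "q dvd (\<Sum>t<m. uv l t * g t)" using P uv_vecs[OF q l] by auto
        moreover have "(\<Sum>t<m. uv l t * g t) = g l" using sum_uv[OF l, of g] by (simp add: mult.commute)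
        ultimately show "g l mod q = 0" by simp
      qed
      then show ?thesis using g Iv vecs_zero by blast
    qed
    then show "(if \<forall>z\<in>vecs q m. q dvd (\<Sum>l<m. z l * g l) then of_nat (card (vecs q m)) else (0::complex)) =
      (if g = z0 then of_nat (card (vecs q m)) else 0)"
    proof (cases "g = z0")
      case True
      then show ?thesis by simp
    next
      case False
      then have "\<not> (\<forall>z\<in>vecs q m. q dvd (\<Sum>l<m. z l * g l))" using \<open>_ \<Longrightarrow> g = z0\<close> by blast
      then show ?thesis using False by (simp only: if_False)
    qed
  qed
  also have "\<dots> = of_nat (card (vecs q m))"
  proof -
    have "z0 \<in> ?I" using Isub unfolding sub_def by auto
    then show ?thesis using finI by simp
  qed
  finally have "card ?I = card (vecs q m)" using X1 by simp
  then show ?thesis using card_subset_eq[OF vecs_card(1) Iv] by simp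
qed



lemma vecs_eqI: "u \<in> vecs q N \<Longrightarrow> v \<in> vecs q N \<Longrightarrow> (\<And>i. i < N \<Longrightarrow> u i mod q = v i mod q) \<Longrightarrow> u = v"
  using vecs_eq by blast

lemma lin_app: "i < N \<Longrightarrow> lin q N m x a i = (\<Sum>j<m. x j * a j i) mod q"
  unfolding lin_def by (simp add: nrm_app)
lemma lin_in: "q > 0 \<Longrightarrow> lin q N m x a \<in> vecs q N" unfolding lin_def by (rule nrm_in)

lemma lin_cong: "(\<And>i. i < m \<Longrightarrow> a i = b i) \<Longrightarrow> lin q N m x a = lin q N m x b"
  unfolding lin_def by (intro arg_cong[where f="nrm q N"] ext sum.cong) auto

lemma lin_upd: "m \<le> j \<Longrightarrow> lin q N m y (a(j:=v)) = lin q N m y a"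
  by (rule lin_cong) auto

lemma lin_0: "lin q N 0 x a = z0" unfolding lin_def nrm_zero by simp

lemma lin_Suc: assumes "q > 0" shows "lin q N (Suc m) y a = ad q N (lin q N m y a) (sc q N (y m) (a m))"
  by (rule vecs_eqI[OF lin_in[OF assms] ad_in[OF assms]]) (simp add: lin_app ad_app sc_app mod_simps)

lemma lin_nrm: "lin q N m (nrm q m c) a = lin q N m c a"
proof -
  have "(\<Sum>j<m. nrm q m c j * a j i) mod q = (\<Sum>j<m. c j * a j i) mod q" for i
    by (rule sum_mod_cong) (simp add: nrm_app mod_simps)
  then show ?thesis unfolding lin_def nrm_eq by simp
qed

lemma sub_z0: "sub q N V \<Longrightarrow> z0 \<in> V" unfolding sub_def by auto
lemma sub_ad: "sub q N V \<Longrightarrow> u \<in> V \<Longrightarrow> v \<in> V \<Longrightarrow> ad q N u v \<in> V" unfolding sub_def by auto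
lemma sub_sc: "sub q N V \<Longrightarrow> v \<in> V \<Longrightarrow> sc q N c v \<in> V" unfolding sub_def by auto
lemma sub_vecs_sub: "sub q N V \<Longrightarrow> v \<in> V \<Longrightarrow> v \<in> vecs q N" unfolding sub_def by auto

lemma lin_in_sub: assumes q: "q > 0" and V: "sub q N V" and a: "\<forall>i<m. a i \<in> V"
  shows "lin q N m x a \<in> V"
  using a
proof (induction m)
  case 0 then show ?case using V by (simp add: lin_0 sub_z0)
next
  case (Suc m) then show ?case using V by (simp add: lin_Suc[OF q] sub_ad sub_sc)
qed

lemma hom_z0: assumes q: "q > 0" and V: "sub q N V" and h: "hom q N M V f" shows "f z0 = z0"
proof -
  have "sc q N 0 z0 = z0" unfolding sc_def nrm_zero by simp
  then have "f z0 = f (sc q N 0 z0)" by simp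
  also have "\<dots> = sc q M 0 (f z0)" using h V unfolding hom_def by (simp add: sub_z0)
  also have "\<dots> = z0" unfolding sc_def nrm_zero by simp
  finally show ?thesis .
qed

lemma hom_lin: assumes q: "q > 0" and V: "sub q N V" and h: "hom q N M V f" and a: "\<forall>i<m. a i \<in> V"
  shows "f (lin q N m x a) = lin q M m x (\<lambda>i. f (a i))"
  using a
proof (induction m)
  case 0 then show ?case using hom_z0[OF q V h] by (simp add: lin_0)
next
  case (Suc m)
  have "f (lin q N (Suc m) x a) = f (ad q N (lin q N m x a) (sc q N (x m) (a m)))" by (simp add: lin_Suc[OF q])
  also have "\<dots> = ad q M (f (lin q N m x a)) (sc q M (x m) (f (a m)))"
    using h Suc.prems lin_in_sub[OF q V, of m a x] sub_sc[OF V] unfolding hom_def by simp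
  also have "\<dots> = lin q M (Suc m) x (\<lambda>i. f (a i))" using Suc by (simp add: lin_Suc[OF q])
  finally show ?case .
qed

lemma lin_uv: "lin q m m x (\<lambda>i. uv i) = nrm q m x"
proof -
  have "(\<Sum>j<m. x j * uv j i) = x i" if "i < m" for i
    using that unfolding uv_def by (simp add: if_distrib cong: if_cong)
  then show ?thesis unfolding lin_def nrm_eq by simp
qed

lemma ad_neg: "q > 0 \<Longrightarrow> ad q N u (sc q N (-1) u) = z0"
  unfolding ad_def nrm_zero by (simp add: sc_app mod_simps)

lemma ad_z0: "u \<in> vecs q N \<Longrightarrow> ad q N u z0 = u"
  unfolding ad_def using nrm_id by simp

lemma z0_ad: "u \<in> vecs q N \<Longrightarrow> ad q N z0 u = u"
  unfolding ad_def using nrm_id by simp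

lemma ad_cancel2: "q > 0 \<Longrightarrow> k \<in> vecs q N \<Longrightarrow> ad q N (ad q N w k) (sc q N (-1) w) = k"
  by (rule vecs_eqI[OF ad_in]) (simp_all add: ad_app sc_app mod_simps)

lemma sc_ad_lin: "q > 0 \<Longrightarrow> sc q N x (ad q N (lin q N j u a) w) = ad q N (lin q N j (\<lambda>i. x * u i) a) (sc q N x w)"
  by (rule vecs_eqI[OF sc_in ad_in]) (simp_all add: ad_app sc_app lin_app mod_simps sum_distrib_left algebra_simps)

lemma ad_lin_lin: "q > 0 \<Longrightarrow> ad q N (lin q N j y a) (ad q N (lin q N j z a) k) = ad q N (lin q N j (\<lambda>i. y i + z i) a) k"
  by (rule vecs_eqI[OF ad_in ad_in]) (simp_all add: ad_app lin_app mod_simps distrib_right sum.distrib add.assoc)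

lemma sc_nrm: "sc q N c (nrm q N x) = sc q N c x"
  unfolding sc_def nrm_eq by (simp add: nrm_app mod_simps)



lemma tor_vecs_card:
  fixes Q c M :: nat
  assumes Q: "Q > 0" and c: "c dvd Q"
  shows "card (tor (int Q) M (int c) (vecs (int Q) M)) = c ^ M"
proof -
  obtain d where d: "Q = c * d" using c by (auto elim: dvdE)
  have c0: "c > 0" "d > 0" using d Q by auto
  let ?T = "{t::int. 0 \<le> t \<and> t < int Q \<and> int Q dvd int c * t}"
  have T: "?T = (\<lambda>u. int d * u) ` {0..<int c}"
  proof (rule set_eqI, rule iffI)
    fix t assume t: "t \<in> ?T"
    then have "int c * int d dvd int c * t" using d by simp
    then have "int d dvd t" using c0 by simp
    then obtain u where u: "t = int d * u" by (auto elim: dvdE)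
    have "0 \<le> u" using t u c0 by (simp add: zero_le_mult_iff)
    moreover have "u < int c"
    proof (rule ccontr)
      assume "\<not> u < int c"
      then have "int d * int c \<le> int d * u" using c0 by simp
      then show False using t u d by (simp add: mult.commute)
    qed
    ultimately show "t \<in> (\<lambda>u. int d * u) ` {0..<int c}" using u by (intro image_eqI[of _ _ u]) auto
  next
    fix t assume "t \<in> (\<lambda>u. int d * u) ` {0..<int c}"
    then obtain u where u0: "u \<in> {0..<int c}" and u1: "t = int d * u" by (rule imageE)
    then have u: "t = int d * u" "0 \<le> u" "u < int c" by auto
    have "int d * u < int d * int c" using u c0 by simp
    then show "t \<in> ?T" using u c0 d by (auto simp: mult.commute)
  qed
  have cardT: "card ?T = c" unfolding T using c0
    by (subst card_image) (auto simp: inj_on_def)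
  have "tor (int Q) M (int c) (vecs (int Q) M) = sv M ?T"
    unfolding tor_def sv_def vecs_def sc_z0_iff by auto
  moreover have "finite ?T" by (rule finite_subset[of _ "{0..<int Q}"]) auto
  ultimately show ?thesis using sv_card[of ?T M] cardT by simp
qed

lemma ext_count:
  fixes Q :: nat and r j N :: nat
  assumes Q: "Q > 1" and V: "sub (int Q) N V"
    and TV: "\<And>c. c dvd Q \<Longrightarrow> card (tor (int Q) N (int c) V) = c ^ r"
    and jr: "j \<le> r"
    and a: "\<forall>i<j. a i \<in> V"
    and h: "hom (int Q) N j V Phi"
    and ha: "\<forall>i<j. Phi (a i) = uv i"
  shows "real (card {v\<in>V. indep (int Q) N (Suc j) (a(j:=v))})
     = real Q ^ j * (real Q ^ (r - j) * (\<Prod>p\<in>prime_factors Q. (1 - 1 / real p ^ (r - j))))"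
proof -
  define q where "q = int Q"
  have q: "q > 0" "q > 1" using Q unfolding q_def by auto
  note V = V[folded q_def] and h = h[folded q_def]
  define L where "L x = lin q N j x a" for x
  define K where "K = {v\<in>V. Phi v = z0}"
  define pi where "pi v = ad q N v (sc q N (-1) (L (Phi v)))" for v
  have Vv: "\<And>v. v \<in> V \<Longrightarrow> v \<in> vecs q N" using V by (rule sub_vecs_sub)
  have LV: "L x \<in> V" for x unfolding L_def by (rule lin_in_sub[OF q(1) V a])
  have hz: "Phi z0 = z0" by (rule hom_z0[OF q(1) V h])
  have hPhi: "Phi v \<in> vecs q j" if "v \<in> V" for v using h that unfolding hom_def by auto
  have hadd: "Phi (ad q N u v) = ad q j (Phi u) (Phi v)" if "u \<in> V" "v \<in> V" for u v
    using h that unfolding hom_def by auto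
  have hsc: "Phi (sc q N c v) = sc q j c (Phi v)" if "v \<in> V" for c v
    using h that unfolding hom_def by auto
  have PL: "Phi (L x) = nrm q j x" for x
  proof -
    have "Phi (L x) = lin q j j x (\<lambda>i. Phi (a i))" unfolding L_def by (rule hom_lin[OF q(1) V h a])
    also have "\<dots> = lin q j j x (\<lambda>i. uv i)" using ha by (intro lin_cong) auto
    finally show ?thesis by (simp add: lin_uv)
  qed
  have Ksub: "sub q N K"
    unfolding sub_def K_def
  proof (intro conjI ballI allI)
    show "{v \<in> V. Phi v = z0} \<subseteq> vecs q N" using Vv by auto
    show "z0 \<in> {v \<in> V. Phi v = z0}" using hz sub_z0[OF V] by auto
    fix u v assume u: "u \<in> {v \<in> V. Phi v = z0}" and v: "v \<in> {v \<in> V. Phi v = z0}"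
    then show "ad q N u v \<in> {v \<in> V. Phi v = z0}"
      using hadd sub_ad[OF V] ad_z0[OF z0_vecs[OF q(1)]] by auto
  next
    fix c v assume v: "v \<in> {v \<in> V. Phi v = z0}"
    have "sc q j c z0 = z0" unfolding sc_def nrm_zero by simp
    then show "sc q N c v \<in> {v \<in> V. Phi v = z0}" using v hsc sub_sc[OF V] by auto
  qed
  have KV: "K \<subseteq> V" unfolding K_def by auto
  have F3: "pi v \<in> K" "ad q N (L (Phi v)) (pi v) = v" if v: "v \<in> V" for v
  proof -
    have "pi v \<in> V" unfolding pi_def using v LV sub_ad[OF V] sub_sc[OF V] by auto
    moreover have "Phi (pi v) = z0"
    proof -
      have "Phi (pi v) = ad q j (Phi v) (sc q j (-1) (Phi (L (Phi v))))"
        unfolding pi_def using v LV sub_sc[OF V] by (simp add: hadd hsc)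
      also have "\<dots> = ad q j (Phi v) (sc q j (-1) (Phi v))" using PL nrm_id[OF hPhi[OF v]] by simp
      also have "\<dots> = z0" by (rule ad_neg[OF q(1)])
      finally show ?thesis .
    qed
    ultimately show "pi v \<in> K" unfolding K_def by simp
    show "ad q N (L (Phi v)) (pi v) = v" unfolding pi_def L_def
      by (rule ad_cancel[OF q(1) lin_in[OF q(1)] Vv[OF v]])
  qed
  have F4: "Phi (ad q N (L x) k) = x" "pi (ad q N (L x) k) = k" if x: "x \<in> vecs q j" and k: "k \<in> K" for x k
  proof -
    have kV: "k \<in> V" and k0: "Phi k = z0" using k unfolding K_def by auto
    have "Phi (ad q N (L x) k) = ad q j (nrm q j x) z0" using hadd[OF LV kV] PL k0 by simp
    also have "\<dots> = x" using nrm_id[OF x] ad_z0[OF x] by simp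
    finally show P: "Phi (ad q N (L x) k) = x" .
    show "pi (ad q N (L x) k) = k" unfolding pi_def P
      by (rule ad_cancel2[OF q(1) Vv[OF kV]])
  qed
  have Lnrm: "L (nrm q j c) = L c" for c unfolding L_def by (rule lin_nrm)
  have Z: "ad q N (L c) k = z0 \<longleftrightarrow> nrm q j c = z0 \<and> k = z0" if k: "k \<in> K" for c k
  proof
    assume A: "ad q N (L c) k = z0"
    have "nrm q j c \<in> vecs q j" by (rule nrm_in[OF q(1)])
    then have "Phi (ad q N (L (nrm q j c)) k) = nrm q j c" "pi (ad q N (L (nrm q j c)) k) = k"
      using F4 k by auto
    then have "Phi z0 = nrm q j c" "pi z0 = k" using A Lnrm by auto
    moreover have "pi z0 = z0"
    proof -
      have "pi z0 = ad q N z0 (sc q N (-1) (L z0))" unfolding pi_def hz ..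
      also have "L z0 = z0" unfolding L_def lin_def nrm_zero by simp
      also have "sc q N (-1) z0 = z0" unfolding sc_def nrm_zero by simp
      finally show ?thesis using ad_z0[OF z0_vecs[OF q(1)]] by simp
    qed
    ultimately show "nrm q j c = z0 \<and> k = z0" using hz by simp
  next
    assume "nrm q j c = z0 \<and> k = z0"
    then have nz: "nrm q j c = z0" "k = z0" by auto
    have "L c = L z0" using Lnrm[of c] nz by simp
    also have "L z0 = z0" unfolding L_def lin_def nrm_zero by simp
    finally have "L c = z0" "k = z0" using nz by auto
    then show "ad q N (L c) k = z0" using ad_z0[OF z0_vecs[OF q(1)]] by simp
  qed
  have decomp: "lin q N (Suc j) y (a(j:=v)) = ad q N (L (\<lambda>i. y i + y j * Phi v i)) (sc q N (y j) (pi v))"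
    if v: "v \<in> V" for v y
  proof -
    have "lin q N (Suc j) y (a(j:=v)) = ad q N (L y) (sc q N (y j) v)"
      unfolding L_def by (simp add: lin_Suc[OF q(1)] lin_upd)
    also have "sc q N (y j) v = sc q N (y j) (ad q N (L (Phi v)) (pi v))" using F3[OF v] by simp
    also have "\<dots> = ad q N (L (\<lambda>i. y j * Phi v i)) (sc q N (y j) (pi v))"
      unfolding L_def by (rule sc_ad_lin[OF q(1)])
    also have "ad q N (L y) \<dots> = ad q N (L (\<lambda>i. y i + y j * Phi v i)) (sc q N (y j) (pi v))"
      unfolding L_def by (rule ad_lin_lin[OF q(1)])
    finally show ?thesis .
  qed
  have scK: "sc q N c k \<in> K" if "k \<in> K" for c k using Ksub that by (rule sub_sc)
  have good: "indep q N (Suc j) (a(j:=v)) \<longleftrightarrow> pi v \<in> full q N K" if v: "v \<in> V" for v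
  proof
    assume ind: "indep q N (Suc j) (a(j:=v))"
    have "q dvd x" if x: "sc q N x (pi v) = z0" for x
    proof -
      define y where "y i = (if i < j then - (x * Phi v i) else if i = j then x else 0)" for i
      have yj: "y j = x" unfolding y_def by simp
      have e1: "nrm q j (\<lambda>i. y i + y j * Phi v i) = z0" unfolding nrm_zero y_def by simp
      have e2: "sc q N (y j) (pi v) = z0" using x yj by simp
      have "ad q N (L (\<lambda>i. y i + y j * Phi v i)) (sc q N (y j) (pi v)) = z0"
        by (subst Z[OF scK[OF F3(1)[OF v]]]) (use e1 e2 in simp)
      then have "lin q N (Suc j) y (a(j:=v)) = z0"
        using decomp[OF v, of y] by simp
      then have "y j mod q = 0" using ind unfolding indep_def by blast
      then show "q dvd x" using yj by (simp add: dvd_eq_mod_eq_0)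
    qed
    then show "pi v \<in> full q N K" using F3(1)[OF v] unfolding full_def by auto
  next
    assume fk: "pi v \<in> full q N K"
    show "indep q N (Suc j) (a(j:=v))" unfolding indep_def
    proof (intro allI impI)
      fix y l assume y0: "lin q N (Suc j) y (a(j:=v)) = z0" and l: "l < Suc j"
      have C: "nrm q j (\<lambda>i. y i + y j * Phi v i) = z0 \<and> sc q N (y j) (pi v) = z0"
        using y0 decomp[OF v, of y] Z[OF scK[OF F3(1)[OF v]]] by simp
      then have A: "\<forall>i<j. (y i + y j * Phi v i) mod q = 0" by (simp add: nrm_zero)
      have B: "q dvd y j" using C fk unfolding full_def by blast
      show "y l mod q = 0"
      proof (cases "l = j")
        case True then show ?thesis using B by (simp add: dvd_eq_mod_eq_0)
      next
        case False
        then have lj: "l < j" using l by simp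
        have "(y l + y j * Phi v l) mod q = 0" using A lj by auto
        then have d1: "q dvd y l + y j * Phi v l" by (rule mod_0_imp_dvd)
        have d2: "q dvd y j * Phi v l" using B by simp
        have "q dvd (y l + y j * Phi v l) - y j * Phi v l" using d1 d2 by (rule dvd_diff)
        then show ?thesis by (simp add: dvd_eq_mod_eq_0)
      qed
    qed
  qed
  define H where "H = (\<lambda>(x, k). ad q N (L x) k)"
  have Hinj: "inj_on H (vecs q j \<times> K)"
  proof (rule inj_onI, clarify)
    fix x k x' k' assume "x \<in> vecs q j" "k \<in> K" "x' \<in> vecs q j" "k' \<in> K" "H (x, k) = H (x', k')"
    then show "x = x' \<and> k = k'" unfolding H_def using F4 by (metis case_prod_conv)
  qed
  have Himg: "H ` (vecs q j \<times> S) = {v\<in>V. pi v \<in> S}" if S: "S \<subseteq> K" for S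
  proof (rule set_eqI, rule iffI)
    fix v assume "v \<in> H ` (vecs q j \<times> S)"
    then obtain x k where xk: "x \<in> vecs q j" "k \<in> S" "v = ad q N (L x) k" unfolding H_def by auto
    have "k \<in> V" using xk S KV by auto
    then have "v \<in> V" using xk LV sub_ad[OF V] by auto
    moreover have "pi v = k" using F4 xk S by auto
    ultimately show "v \<in> {v\<in>V. pi v \<in> S}" using xk by auto
  next
    fix v assume v: "v \<in> {v\<in>V. pi v \<in> S}"
    then have "v = H (Phi v, pi v)" unfolding H_def using F3 by auto
    moreover have "(Phi v, pi v) \<in> vecs q j \<times> S" using v hPhi by auto
    ultimately show "v \<in> H ` (vecs q j \<times> S)" by blast
  qed
  have cardH: "card {v\<in>V. pi v \<in> S} = Q ^ j * card S" if S: "S \<subseteq> K" for S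
  proof -
    have "card {v\<in>V. pi v \<in> S} = card (vecs q j \<times> S)"
      unfolding Himg[OF S, symmetric]
      by (rule card_image) (rule inj_on_subset[OF Hinj], use S in auto)
    also have "\<dots> = card (vecs q j) * card S" by (rule card_cartesian_product)
    finally show ?thesis unfolding q_def vecs_card by simp
  qed
  have torK: "card (tor q N (int c) K) = c ^ (r - j)" if c: "c dvd Q" for c
  proof -
    have c0: "c > 0" using c Q by (metis dvd_0_left_iff gr0I not_one_less_zero)
    have tV: "tor q N (int c) V = H ` (tor q j (int c) (vecs q j) \<times> tor q N (int c) K)"
    proof (rule set_eqI, rule iffI)
      fix v assume v: "v \<in> tor q N (int c) V"
      then have vV: "v \<in> V" and vc: "sc q N (int c) v = z0" unfolding tor_def by auto
      have "sc q N (int c) v = ad q N (L (\<lambda>i. int c * Phi v i)) (sc q N (int c) (pi v))"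
        using F3(2)[OF vV] sc_ad_lin[OF q(1)] unfolding L_def by metis
      then have "nrm q j (\<lambda>i. int c * Phi v i) = z0" "sc q N (int c) (pi v) = z0"
        using vc Z[OF scK[OF F3(1)[OF vV]]] by auto
      then have "Phi v \<in> tor q j (int c) (vecs q j)" "pi v \<in> tor q N (int c) K"
        unfolding tor_def sc_def using hPhi[OF vV] F3(1)[OF vV] by auto
      moreover have "v = H (Phi v, pi v)" unfolding H_def using F3 vV by auto
      ultimately show "v \<in> H ` (tor q j (int c) (vecs q j) \<times> tor q N (int c) K)" by blast
    next
      fix v assume "v \<in> H ` (tor q j (int c) (vecs q j) \<times> tor q N (int c) K)"
      then obtain x k where xk: "x \<in> vecs q j" "sc q j (int c) x = z0" "k \<in> K" "sc q N (int c) k = z0"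
        "v = ad q N (L x) k" unfolding H_def tor_def by auto
      have kV: "k \<in> V" using xk KV by auto
      have vV: "v \<in> V" using xk kV LV sub_ad[OF V] by auto
      have "sc q N (int c) v = ad q N (L (\<lambda>i. int c * x i)) (sc q N (int c) k)"
        using xk(5) sc_ad_lin[OF q(1)] unfolding L_def by metis
      also have "\<dots> = z0" by (subst Z[OF scK[OF xk(3)]]) (use xk(2,4) in \<open>simp add: sc_def\<close>)
      finally show "v \<in> tor q N (int c) V" using vV unfolding tor_def by simp
    qed
    then have "card (tor q N (int c) V) = card (tor q j (int c) (vecs q j) \<times> tor q N (int c) K)"
    proof -
      have "tor q j (int c) (vecs q j) \<times> tor q N (int c) K \<subseteq> vecs q j \<times> K" unfolding tor_def by auto
      then have "inj_on H (tor q j (int c) (vecs q j) \<times> tor q N (int c) K)" by (rule inj_on_subset[OF Hinj])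
      then show ?thesis unfolding tV by (simp add: card_image)
    qed
    also have "\<dots> = c ^ j * card (tor q N (int c) K)"
      using tor_vecs_card[of Q c j] Q c unfolding q_def by (simp add: card_cartesian_product)
    finally have "c ^ r = c ^ j * card (tor q N (int c) K)" using TV[OF c] unfolding q_def by simp
    moreover have "c ^ r = c ^ j * c ^ (r - j)" using jr by (simp add: power_add[symmetric])
    ultimately show ?thesis using c0 by simp
  qed
  have "{v\<in>V. indep q N (Suc j) (a(j:=v))} = {v\<in>V. pi v \<in> full q N K}" using good by auto
  then have "card {v\<in>V. indep q N (Suc j) (a(j:=v))} = Q ^ j * card (full q N K)"
    using cardH[of "full q N K"] unfolding full_def by auto
  moreover have "real (card (full q N K)) = real Q ^ (r - j) * (\<Prod>p\<in>prime_factors Q. (1 - 1 / real p ^ (r - j)))"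
    unfolding q_def by (rule full_card) (use Ksub[unfolded q_def] Q torK[unfolded q_def] in auto)
  ultimately show ?thesis unfolding q_def by simp
qed



lemma sub_ker: assumes q: "q > 0" and G: "sub q N G" and h: "hom q N M G f"
  shows "sub q N {v\<in>G. f v = z0}"
  unfolding sub_def
proof (intro conjI ballI allI)
  have hz: "f z0 = z0" by (rule hom_z0[OF q G h])
  show "{v \<in> G. f v = z0} \<subseteq> vecs q N" using G unfolding sub_def by auto
  show "z0 \<in> {v \<in> G. f v = z0}" using hz sub_z0[OF G] by auto
  fix u v assume u: "u \<in> {v \<in> G. f v = z0}" and v: "v \<in> {v \<in> G. f v = z0}"
  have "f (ad q N u v) = ad q M z0 z0" using h u v unfolding hom_def by auto
  then show "ad q N u v \<in> {v \<in> G. f v = z0}"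
    using u v sub_ad[OF G] ad_z0[OF z0_vecs[OF q]] by auto
next
  fix c v assume v: "v \<in> {v \<in> G. f v = z0}"
  have "sc q M c z0 = z0" unfolding sc_def nrm_zero by simp
  moreover have "f (sc q N c v) = sc q M c (f v)" using h v unfolding hom_def by auto
  ultimately show "sc q N c v \<in> {v \<in> G. f v = z0}" using v sub_sc[OF G] by auto
qed

lemma sub_tor: assumes q: "q > 0" and G: "sub q N G" shows "sub q N (tor q N c G)"
proof -
  have h: "hom q N N G (sc q N c)" unfolding hom_def
  proof (intro conjI ballI allI)
    fix u v assume "u \<in> G" "v \<in> G"
    show "sc q N c (ad q N u v) = ad q N (sc q N c u) (sc q N c v)"
      by (rule vecs_eqI[OF sc_in[OF q] ad_in[OF q]]) (simp_all add: sc_app ad_app mod_simps distrib_left)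
  next
    fix v x assume "v \<in> G"
    show "sc q N c (sc q N x v) = sc q N x (sc q N c v)"
      by (rule vecs_eqI[OF sc_in[OF q] sc_in[OF q]]) (simp_all add: sc_app mod_simps ac_simps)
  next
    fix v show "sc q N c v \<in> vecs q N" by (rule sc_in[OF q])
  qed
  show ?thesis unfolding tor_def by (rule sub_ker[OF q G h])
qed

lemma image_tor:
  fixes Q c :: nat
  assumes Q: "Q > 0" and c: "c dvd Q" and surj: "mat (int Q) N m A ` vecs (int Q) N = vecs (int Q) m"
  shows "mat (int Q) N m A ` tor (int Q) N (int c) (vecs (int Q) N) = tor (int Q) m (int c) (vecs (int Q) m)"
proof (rule set_eqI, rule iffI)
  let ?q = "int Q"
  have q: "?q > 0" using Q by simp
  fix t assume "t \<in> mat ?q N m A ` tor ?q N (int c) (vecs ?q N)"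
  then obtain v where v: "v \<in> vecs ?q N" "sc ?q N (int c) v = z0" "t = mat ?q N m A v" unfolding tor_def by auto
  have "sc ?q m (int c) t = mat ?q N m A z0" using v mat_sc by metis
  then show "t \<in> tor ?q m (int c) (vecs ?q m)" unfolding tor_def using v mat_in[OF q] mat_z0 by auto
next
  let ?q = "int Q"
  have q: "?q > 0" using Q by simp
  fix t assume t: "t \<in> tor ?q m (int c) (vecs ?q m)"
  obtain d where d: "Q = c * d" using c by (auto elim: dvdE)
  have c0: "c > 0" "d > 0" using d Q by auto
  have tv: "t \<in> vecs ?q m" and tc: "\<forall>l<m. ?q dvd int c * t l" using t unfolding tor_def sc_z0_iff by auto
  have dt: "int d dvd t l" if "l < m" for l
  proof -
    have "int c * int d dvd int c * t l" using tc that d by simp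
    then show ?thesis using c0 by simp
  qed
  define t' where "t' = nrm ?q m (\<lambda>l. t l div int d)"
  obtain y where y: "y \<in> vecs ?q N" "mat ?q N m A y = t'" using surj nrm_in[OF q] unfolding t'_def
    by (metis imageE)
  have "sc ?q N (int c) (sc ?q N (int d) y) = z0"
    unfolding sc_z0_iff using d by (simp add: sc_app mod_simps mult.assoc[symmetric])
  then have inT: "sc ?q N (int d) y \<in> tor ?q N (int c) (vecs ?q N)" unfolding tor_def using sc_in[OF q] by auto
  have "mat ?q N m A (sc ?q N (int d) y) = sc ?q m (int d) t'" using y mat_sc by metis
  also have "\<dots> = t"
  proof (rule vecs_eqI[OF sc_in[OF q] tv])
    fix l assume l: "l < m"
    have "int d * (t l div int d) = t l" using dt[OF l] by simp
    then show "sc ?q m (int d) t' l mod ?q = t l mod ?q" unfolding t'_def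
      by (simp add: sc_app nrm_app l mod_simps)
  qed
  finally show "t \<in> mat ?q N m A ` tor ?q N (int c) (vecs ?q N)" using inT by (metis image_eqI)
qed

lemma sum_split: fixes n m :: nat and f :: "nat \<Rightarrow> 'a::comm_monoid_add" shows "(\<Sum>t<n+m. f t) = (\<Sum>t<n. f t) + (\<Sum>i<m. f (n+i))"
  by (induction m) (simp_all add: add.assoc)

definition LA :: "nat \<Rightarrow> (nat \<Rightarrow> nat \<Rightarrow> int) \<Rightarrow> nat \<Rightarrow> nat \<Rightarrow> int" where
  "LA n a l t = (if t < n then - a l (n+t) else a l (t-n))"
definition RB :: "nat \<Rightarrow> (nat \<Rightarrow> nat \<Rightarrow> int) \<Rightarrow> nat \<Rightarrow> nat \<Rightarrow> int" where
  "RB n b l t = (if t < n then b l (n+t) else - b l (t-n))"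

lemma symp_LA: "symp q n (a l) v = (\<Sum>t<2*n. LA n a l t * v t) mod q"
proof -
  have "(\<Sum>t<2*n. LA n a l t * v t) = (\<Sum>t<n. LA n a l t * v t) + (\<Sum>i<n. LA n a l (n+i) * v (n+i))"
    using sum_split[of "\<lambda>t. LA n a l t * v t" n n] by (simp add: mult_2)
  also have "\<dots> = (\<Sum>i<n. a l i * v (n+i) - a l (n+i) * v i)"
    unfolding LA_def by (simp add: sum.distrib sum_subtractf sum_negf)
  finally show ?thesis unfolding symp_def by simp
qed

lemma symp_RB: "symp q n v (b l) = (\<Sum>t<2*n. RB n b l t * v t) mod q"
proof -
  have "(\<Sum>t<2*n. RB n b l t * v t) = (\<Sum>t<n. RB n b l t * v t) + (\<Sum>i<n. RB n b l (n+i) * v (n+i))"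
    using sum_split[of "\<lambda>t. RB n b l t * v t" n n] by (simp add: mult_2)
  also have "\<dots> = (\<Sum>i<n. v i * b l (n+i) - v (n+i) * b l i)"
    unfolding RB_def by (simp add: sum.distrib sum_subtractf sum_negf algebra_simps)
  finally show ?thesis unfolding symp_def by simp
qed

lemma mat_LA: "l < j \<Longrightarrow> mat q (2*n) j (LA n a) v l = symp q n (a l) v"
  unfolding mat_def by (simp add: nrm_app symp_LA)

lemma mat_RB: "l < j \<Longrightarrow> mat q (2*n) j (RB n b) v l = symp q n v (b l)"
  unfolding mat_def by (simp add: nrm_app symp_RB)

lemma symp_antisym: "symp q n u v = 0 \<Longrightarrow> symp q n v u = 0"
proof -
  assume A: "symp q n u v = 0"
  have "(\<Sum>i<n. v i * u (n+i) - v (n+i) * u i) = - (\<Sum>i<n. u i * v (n+i) - u (n+i) * v i)"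
    by (simp add: sum_negf[symmetric] algebra_simps)
  moreover have "q dvd (\<Sum>i<n. u i * v (n+i) - u (n+i) * v i)" using A unfolding symp_def
    by (simp add: dvd_eq_mod_eq_0)
  ultimately show ?thesis unfolding symp_def by (simp add: dvd_eq_mod_eq_0[symmetric])
qed

lemma symp_self: "symp q n v v = 0"
  unfolding symp_def by (simp add: mult.commute)

lemma indep_LA: assumes ind: "indep q (2*n) j a" shows "indep q (2*n) j (LA n a)"
  unfolding indep_def
proof (rule allI, rule impI)
  fix x assume x: "lin q (2*n) j x (LA n a) = z0"
  have X: "\<forall>t<2*n. (\<Sum>l<j. x l * LA n a l t) mod q = 0" using x unfolding lin_def nrm_zero .
  have "lin q (2*n) j x a = z0" unfolding lin_def nrm_zero
  proof (intro allI impI)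
    fix i assume i: "i < 2*n"
    show "(\<Sum>l<j. x l * a l i) mod q = 0"
    proof (cases "i < n")
      case True
      have "(\<Sum>l<j. x l * LA n a l (n+i)) mod q = 0" using X True by simp
      then show ?thesis unfolding LA_def by simp
    next
      case False
      then have t: "i - n < 2*n" "n + (i - n) = i" using i by auto
      have "(\<Sum>l<j. x l * LA n a l (i-n)) mod q = 0" using X t by simp
      then have "(\<Sum>l<j. - (x l * a l i)) mod q = 0" unfolding LA_def using False i t by simp
      then have "q dvd - (\<Sum>l<j. x l * a l i)" by (simp add: sum_negf dvd_eq_mod_eq_0)
      then show ?thesis by (simp add: dvd_eq_mod_eq_0[symmetric])
    qed
  qed
  then show "\<forall>l<j. x l mod q = 0" using ind unfolding indep_def by blast
qed



lemma mat_z0_iff: "mat q N m A v = z0 \<longleftrightarrow> (\<forall>l<m. mat q N m A v l = 0)"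
  unfolding mat_def nrm_def by (auto simp: fun_eq_iff)

lemma uv_sym: "uv l i = uv i l" unfolding uv_def by auto

lemma symp_ext:
  fixes Q :: nat
  assumes Q: "Q > 1" and jn: "j \<le> n"
    and a: "\<forall>i<j. a i \<in> vecs (int Q) (2*n)" and ind: "indep (int Q) (2*n) j a"
    and iso: "\<forall>i<j. \<forall>l<j. symp (int Q) n (a i) (a l) = 0"
  shows "real (card {v \<in> vecs (int Q) (2*n). (\<forall>i<j. symp (int Q) n (a i) v = 0) \<and> indep (int Q) (2*n) (Suc j) (a(j:=v))})
    = real Q ^ j * (real Q ^ (2*n - j - j) * (\<Prod>p\<in>prime_factors Q. (1 - 1 / real p ^ (2*n - j - j))))"
proof -
  define q where "q = int Q"
  have q: "q > 0" "q > 1" using Q unfolding q_def by auto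
  define f where "f = mat q (2*n) j (LA n a)"
  define V where "V = {v\<in>vecs q (2*n). f v = z0}"
  have Vchar: "v \<in> V \<longleftrightarrow> v \<in> vecs q (2*n) \<and> (\<forall>i<j. symp q n (a i) v = 0)" for v
    unfolding V_def f_def mat_z0_iff by (auto simp: mat_LA)
  have hf: "hom q (2*n) j G f" for G unfolding f_def by (rule mat_hom[OF q(1)])
  have Vsub: "sub q (2*n) V" unfolding V_def by (rule sub_ker[OF q(1) sub_vecs[OF q(1)] hf])
  have surj: "f ` vecs q (2*n) = vecs q j" unfolding f_def
    by (rule duality[OF q(2) indep_LA[OF ind[folded q_def]]])
  have TV: "card (tor (int Q) (2*n) (int c) V) = c ^ (2*n - j)" if c: "c dvd Q" for c
  proof -
    have c0: "c > 0" using c Q by (metis dvd_0_left_iff gr0I not_one_less_zero)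
    let ?G = "tor q (2*n) (int c) (vecs q (2*n))"
    have Gs: "sub q (2*n) ?G" by (rule sub_tor[OF q(1) sub_vecs[OF q(1)]])
    have "card ?G = card {v\<in>?G. f v = z0} * card (f ` ?G)" by (rule hom_card[OF q(1) Gs hf])
    moreover have "{v\<in>?G. f v = z0} = tor q (2*n) (int c) V" unfolding tor_def V_def by auto
    moreover have "f ` ?G = tor q j (int c) (vecs q j)" unfolding f_def q_def
      by (rule image_tor) (use Q c surj[unfolded f_def q_def] in auto)
    ultimately have "c ^ (2*n) = card (tor q (2*n) (int c) V) * c ^ j"
      using tor_vecs_card[of Q c] Q c unfolding q_def by simp
    moreover have "c ^ (2*n) = c ^ (2*n - j) * c ^ j" using jn by (simp add: power_add[symmetric])
    ultimately show ?thesis using c0 unfolding q_def by simp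
  qed
  have exb: "\<exists>b. b \<in> vecs q (2*n) \<and> f b = uv l" if "l < j" for l
    using surj uv_vecs[OF q(2) that] by (metis imageE)
  define B where "B l = (SOME b. b \<in> vecs q (2*n) \<and> f b = uv l)" for l
  have B: "B l \<in> vecs q (2*n)" "f (B l) = uv l" if "l < j" for l
    using someI_ex[OF exb[OF that]] unfolding B_def by auto
  define Phi where "Phi = mat q (2*n) j (RB n B)"
  have hPhi: "hom q (2*n) j V Phi" unfolding Phi_def by (rule mat_hom[OF q(1)])
  have ha: "\<forall>i<j. Phi (a i) = uv i"
  proof (intro allI impI)
    fix i assume i: "i < j"
    show "Phi (a i) = uv i"
    proof (rule vecs_eqI[OF _ uv_vecs[OF q(2) i]])
      show "Phi (a i) \<in> vecs q j" unfolding Phi_def by (rule mat_in[OF q(1)])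
      fix l assume l: "l < j"
      have "Phi (a i) l = symp q n (a i) (B l)" unfolding Phi_def by (rule mat_RB[OF l])
      also have "\<dots> = f (B l) i" unfolding f_def by (rule mat_LA[OF i, symmetric])
      also have "\<dots> = uv i l" using B(2)[OF l] uv_sym by simp
      finally show "Phi (a i) l mod q = uv i l mod q" by simp
    qed
  qed
  have aV: "\<forall>i<j. a i \<in> V" using a iso unfolding Vchar q_def by auto
  have jr: "j \<le> 2*n - j" using jn by simp
  have "real (card {v\<in>V. indep (int Q) (2*n) (Suc j) (a(j:=v))})
     = real Q ^ j * (real Q ^ (2*n - j - j) * (\<Prod>p\<in>prime_factors Q. (1 - 1 / real p ^ (2*n - j - j))))"
    by (rule ext_count[OF Q Vsub[unfolded q_def] TV jr aV[unfolded q_def] hPhi[unfolded q_def] ha])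
  moreover have "{v\<in>V. indep (int Q) (2*n) (Suc j) (a(j:=v))} =
     {v \<in> vecs (int Q) (2*n). (\<forall>i<j. symp (int Q) n (a i) v = 0) \<and> indep (int Q) (2*n) (Suc j) (a(j:=v))}"
    using Vchar unfolding q_def by auto
  ultimately show ?thesis by simp
qed

lemma gl_ext:
  fixes Q :: nat
  assumes Q: "Q > 1" and js: "j \<le> s"
    and x: "\<forall>i<j. x i \<in> vecs (int Q) s" and ind: "indep (int Q) s j x"
  shows "real (card {v \<in> vecs (int Q) s. indep (int Q) s (Suc j) (x(j:=v))})
    = real Q ^ j * (real Q ^ (s - j) * (\<Prod>p\<in>prime_factors Q. (1 - 1 / real p ^ (s - j))))"
proof -
  define q where "q = int Q"
  have q: "q > 0" "q > 1" using Q unfolding q_def by auto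
  define f where "f = mat q s j x"
  have surj: "f ` vecs q s = vecs q j" unfolding f_def
    by (rule duality[OF q(2) ind[folded q_def]])
  have exb: "\<exists>b. b \<in> vecs q s \<and> f b = uv l" if "l < j" for l
    using surj uv_vecs[OF q(2) that] by (metis imageE)
  define Y where "Y l = (SOME b. b \<in> vecs q s \<and> f b = uv l)" for l
  have Y: "Y l \<in> vecs q s" "f (Y l) = uv l" if "l < j" for l
    using someI_ex[OF exb[OF that]] unfolding Y_def by auto
  define Phi where "Phi = mat q s j Y"
  have hPhi: "hom q s j (vecs q s) Phi" unfolding Phi_def by (rule mat_hom[OF q(1)])
  have ha: "\<forall>i<j. Phi (x i) = uv i"
  proof (intro allI impI)
    fix i assume i: "i < j"
    show "Phi (x i) = uv i"
    proof (rule vecs_eqI[OF _ uv_vecs[OF q(2) i]])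
      show "Phi (x i) \<in> vecs q j" unfolding Phi_def by (rule mat_in[OF q(1)])
      fix l assume l: "l < j"
      have "Phi (x i) l = (\<Sum>t<s. Y l t * x i t) mod q" unfolding Phi_def mat_def by (simp add: nrm_app l)
      also have "\<dots> = (\<Sum>t<s. x i t * Y l t) mod q" by (simp add: mult.commute)
      also have "\<dots> = f (Y l) i" unfolding f_def mat_def by (simp add: nrm_app i)
      also have "\<dots> = uv i l" using Y(2)[OF l] uv_sym by simp
      finally show "Phi (x i) l mod q = uv i l mod q" by simp
    qed
  qed
  have TV: "card (tor (int Q) s (int c) (vecs (int Q) s)) = c ^ s" if "c dvd Q" for c
    using tor_vecs_card[of Q c s] Q that by simp
  show ?thesis
    by (rule ext_count[OF Q sub_vecs TV js x hPhi[unfolded q_def] ha]) (use Q in simp)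
qed



definition svg :: "nat \<Rightarrow> 'a set \<Rightarrow> 'a \<Rightarrow> (nat \<Rightarrow> 'a) set" where
  "svg N S d = {a. (\<forall>i<N. a i \<in> S) \<and> (\<forall>i\<ge>N. a i = d)}"

lemma svg_finite: assumes "finite S" shows "finite (svg N S d)"
proof (induction N)
  case 0
  have "svg 0 S d = {\<lambda>_. d}" unfolding svg_def by auto
  then show ?case by simp
next
  case (Suc N)
  have "svg (Suc N) S d \<subseteq> (\<lambda>(a,t). a(N:=t)) ` (svg N S d \<times> S)"
  proof
    fix b assume b: "b \<in> svg (Suc N) S d"
    have "b = (\<lambda>(a,t). a(N:=t)) (b(N:=d), b N)" by auto
    moreover have "(b(N:=d), b N) \<in> svg N S d \<times> S" using b unfolding svg_def by auto
    ultimately show "b \<in> (\<lambda>(a,t). a(N:=t)) ` (svg N S d \<times> S)" by blast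
  qed
  then show ?case using Suc assms finite_subset by blast
qed

definition TT :: "nat \<Rightarrow> nat \<Rightarrow> nat \<Rightarrow> (nat \<Rightarrow> nat \<Rightarrow> int) set" where
  "TT Q n j = {a. (\<forall>i<j. a i \<in> vecs (int Q) (2*n)) \<and> (\<forall>i\<ge>j. a i = z0) \<and> indep (int Q) (2*n) j a
      \<and> (\<forall>i<j. \<forall>l<j. symp (int Q) n (a i) (a l) = 0)}"
definition GG :: "nat \<Rightarrow> nat \<Rightarrow> nat \<Rightarrow> (nat \<Rightarrow> nat \<Rightarrow> int) set" where
  "GG Q s j = {x. (\<forall>i<j. x i \<in> vecs (int Q) s) \<and> (\<forall>i\<ge>j. x i = z0) \<and> indep (int Q) s j x}"

lemma indep_cong: "(\<And>i. i < m \<Longrightarrow> a i = b i) \<Longrightarrow> indep q N m a = indep q N m b"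
  unfolding indep_def using lin_cong by metis

lemma indep_restrict: assumes "indep q N (Suc j) b" shows "indep q N j b"
  unfolding indep_def
proof (rule allI, rule impI)
  fix x assume x: "lin q N j x b = z0"
  have e: "(\<Sum>l<Suc j. (x(j:=0)) l * b l i) = (\<Sum>l<j. x l * b l i)" for i
  proof -
    have "(\<Sum>l<Suc j. (x(j:=0)) l * b l i) = (\<Sum>l<j. (x(j:=0)) l * b l i)" by simp
    also have "\<dots> = (\<Sum>l<j. x l * b l i)" by (rule sum.cong) auto
    finally show ?thesis .
  qed
  have "lin q N (Suc j) (x(j:=0)) b = lin q N j x b"
    unfolding lin_def e ..
  then have "\<forall>l<Suc j. (x(j:=0)) l mod q = 0" using x assms unfolding indep_def by metis
  then show "\<forall>l<j. x l mod q = 0" by (metis fun_upd_other less_SucI nat_neq_iff)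
qed

lemma indep_0: "indep q N 0 a" unfolding indep_def by simp

lemma TT_finite: "finite (TT Q n j)"
proof -
  have "TT Q n j \<subseteq> svg j (vecs (int Q) (2*n)) z0" unfolding TT_def svg_def by auto
  then show ?thesis using svg_finite[OF vecs_card(1)] finite_subset by blast
qed

lemma GG_finite: "finite (GG Q s j)"
proof -
  have "GG Q s j \<subseteq> svg j (vecs (int Q) s) z0" unfolding GG_def svg_def by auto
  then show ?thesis using svg_finite[OF vecs_card(1)] finite_subset by blast
qed

lemma upd_inj: "inj_on (\<lambda>(a, v). a(j:=v)) (SIGMA a:A. B a)" if "\<forall>a\<in>A. a j = z0" for A B
proof (rule inj_onI, clarify)
  fix a v a' v' assume a: "a \<in> A" "a' \<in> A" and e: "a(j := v) = a'(j := v')"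
  have "v = v'" using e by (metis fun_upd_same)
  moreover have "a = a'"
  proof
    fix i show "a i = a' i"
    proof (cases "i = j")
      case True then show ?thesis using that a by simp
    next
      case False then show ?thesis using e by (metis fun_upd_other)
    qed
  qed
  ultimately show "a = a' \<and> v = v'" by simp
qed

lemma TT_Suc: "TT Q n (Suc j) = (\<lambda>(a, v). a(j:=v)) ` (SIGMA a:TT Q n j.
    {v \<in> vecs (int Q) (2*n). (\<forall>i<j. symp (int Q) n (a i) v = 0) \<and> indep (int Q) (2*n) (Suc j) (a(j:=v))})"
  (is "?L = ?R")
proof (rule set_eqI, rule iffI)
  fix b assume b: "b \<in> ?L"
  define a where "a = b(j:=z0)"
  have ab: "b = a(j := b j)" unfolding a_def by simp
  have bi: "indep (int Q) (2*n) (Suc j) b" using b unfolding TT_def by auto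
  have "indep (int Q) (2*n) j a"
    using indep_restrict[OF bi] indep_cong[of j a b] unfolding a_def by auto
  then have "a \<in> TT Q n j" using b unfolding TT_def a_def by auto
  moreover have "b j \<in> vecs (int Q) (2*n)" "\<forall>i<j. symp (int Q) n (a i) (b j) = 0"
    using b unfolding TT_def a_def by auto
  ultimately show "b \<in> ?R" using bi ab by (intro image_eqI[of _ _ "(a, b j)"]) auto
next
  fix b assume "b \<in> ?R"
  then obtain a v where a: "a \<in> TT Q n j" and v: "v \<in> vecs (int Q) (2*n)" "\<forall>i<j. symp (int Q) n (a i) v = 0"
    "indep (int Q) (2*n) (Suc j) (a(j:=v))" and b: "b = a(j:=v)" by auto
  have "\<forall>i<Suc j. \<forall>l<Suc j. symp (int Q) n (b i) (b l) = 0"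
  proof (intro allI impI)
    fix i l assume i: "i < Suc j" and l: "l < Suc j"
    show "symp (int Q) n (b i) (b l) = 0"
    proof (cases "i = j")
      case True
      show ?thesis
      proof (cases "l = j")
        case True then show ?thesis using \<open>i = j\<close> symp_self by simp
      next
        case False then show ?thesis using \<open>i = j\<close> l v(2) b symp_antisym by auto
      qed
    next
      case False
      show ?thesis
      proof (cases "l = j")
        case True then show ?thesis using False i v(2) b by auto
      next
        case False then show ?thesis using \<open>i \<noteq> j\<close> i l a b unfolding TT_def by auto
      qed
    qed
  qed
  then show "b \<in> ?L" using a v b unfolding TT_def by (auto simp: less_Suc_eq)
qed

lemma GG_Suc: "GG Q s (Suc j) = (\<lambda>(a, v). a(j:=v)) ` (SIGMA a:GG Q s j.
    {v \<in> vecs (int Q) s. indep (int Q) s (Suc j) (a(j:=v))})"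
  (is "?L = ?R")
proof (rule set_eqI, rule iffI)
  fix b assume b: "b \<in> ?L"
  define a where "a = b(j:=z0)"
  have ab: "b = a(j := b j)" unfolding a_def by simp
  have bi: "indep (int Q) s (Suc j) b" using b unfolding GG_def by auto
  have "indep (int Q) s j a"
    using indep_restrict[OF bi] indep_cong[of j a b] unfolding a_def by auto
  then have "a \<in> GG Q s j" using b unfolding GG_def a_def by auto
  moreover have "b j \<in> vecs (int Q) s" using b unfolding GG_def by auto
  ultimately show "b \<in> ?R" using bi ab by (intro image_eqI[of _ _ "(a, b j)"]) auto
next
  fix b assume "b \<in> ?R"
  then obtain a v where a: "a \<in> GG Q s j" and v: "v \<in> vecs (int Q) s"
    "indep (int Q) s (Suc j) (a(j:=v))" and b: "b = a(j:=v)" by auto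
  then show "b \<in> ?L" using a v b unfolding GG_def by (auto simp: less_Suc_eq)
qed

lemma TT_card:
  fixes Q :: nat assumes Q: "Q > 1"
  shows "m \<le> n \<Longrightarrow> real (card (TT Q n m)) =
    (\<Prod>j<m. real Q ^ j * (real Q ^ (2*n - j - j) * (\<Prod>p\<in>prime_factors Q. (1 - 1 / real p ^ (2*n - j - j)))))"
proof (induction m)
  case 0
  have "TT Q n 0 = {\<lambda>_. z0}" unfolding TT_def by (auto simp: indep_0)
  then show ?case by simp
next
  case (Suc j)
  let ?E = "\<lambda>a. {v \<in> vecs (int Q) (2*n). (\<forall>i<j. symp (int Q) n (a i) v = 0) \<and> indep (int Q) (2*n) (Suc j) (a(j:=v))}"
  let ?c = "real Q ^ j * (real Q ^ (2*n - j - j) * (\<Prod>p\<in>prime_factors Q. (1 - 1 / real p ^ (2*n - j - j))))"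
  have inj: "inj_on (\<lambda>(a, v). a(j:=v)) (SIGMA a:TT Q n j. ?E a)"
    by (rule upd_inj) (auto simp: TT_def)
  have "card (TT Q n (Suc j)) = card (SIGMA a:TT Q n j. ?E a)"
    unfolding TT_Suc by (rule card_image[OF inj])
  also have "\<dots> = (\<Sum>a\<in>TT Q n j. card (?E a))"
    using TT_finite vecs_card(1) by (intro card_SigmaI) auto
  finally have "real (card (TT Q n (Suc j))) = (\<Sum>a\<in>TT Q n j. real (card (?E a)))" by simp
  also have "\<dots> = (\<Sum>a\<in>TT Q n j. ?c)"
  proof (rule sum.cong[OF refl])
    fix a assume a: "a \<in> TT Q n j"
    show "real (card (?E a)) = ?c"
      by (rule symp_ext[OF Q]) (use a Suc.prems in \<open>auto simp: TT_def\<close>)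
  qed
  also have "\<dots> = real (card (TT Q n j)) * ?c" by simp
  also have "\<dots> = (\<Prod>j<Suc j. real Q ^ j * (real Q ^ (2*n - j - j) * (\<Prod>p\<in>prime_factors Q. (1 - 1 / real p ^ (2*n - j - j)))))"
    using Suc by simp
  finally show ?case .
qed

lemma GG_card:
  fixes Q :: nat assumes Q: "Q > 1"
  shows "m \<le> s \<Longrightarrow> real (card (GG Q s m)) =
    (\<Prod>j<m. real Q ^ j * (real Q ^ (s - j) * (\<Prod>p\<in>prime_factors Q. (1 - 1 / real p ^ (s - j)))))"
proof (induction m)
  case 0
  have "GG Q s 0 = {\<lambda>_. z0}" unfolding GG_def by (auto simp: indep_0)
  then show ?case by simp
next
  case (Suc j)
  let ?E = "\<lambda>a. {v \<in> vecs (int Q) s. indep (int Q) s (Suc j) (a(j:=v))}"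
  let ?c = "real Q ^ j * (real Q ^ (s - j) * (\<Prod>p\<in>prime_factors Q. (1 - 1 / real p ^ (s - j))))"
  have inj: "inj_on (\<lambda>(a, v). a(j:=v)) (SIGMA a:GG Q s j. ?E a)"
    by (rule upd_inj) (auto simp: GG_def)
  have "card (GG Q s (Suc j)) = card (SIGMA a:GG Q s j. ?E a)"
    unfolding GG_Suc by (rule card_image[OF inj])
  also have "\<dots> = (\<Sum>a\<in>GG Q s j. card (?E a))"
    using GG_finite vecs_card(1) by (intro card_SigmaI) auto
  finally have "real (card (GG Q s (Suc j))) = (\<Sum>a\<in>GG Q s j. real (card (?E a)))" by simp
  also have "\<dots> = (\<Sum>a\<in>GG Q s j. ?c)"
  proof (rule sum.cong[OF refl])
    fix a assume a: "a \<in> GG Q s j"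
    show "real (card (?E a)) = ?c"
      by (rule gl_ext[OF Q]) (use a Suc.prems in \<open>auto simp: GG_def\<close>)
  qed
  also have "\<dots> = real (card (GG Q s j)) * ?c" by simp
  also have "\<dots> = (\<Prod>j<Suc j. real Q ^ j * (real Q ^ (s - j) * (\<Prod>p\<in>prime_factors Q. (1 - 1 / real p ^ (s - j)))))"
    using Suc by simp
  finally show ?case .
qed



definition spn :: "int \<Rightarrow> nat \<Rightarrow> nat \<Rightarrow> (nat \<Rightarrow> nat \<Rightarrow> int) \<Rightarrow> (nat \<Rightarrow> int) set" where
  "spn q M m a = {lin q M m x a | x. True}"

lemma lin_eqI: "(\<And>t. t < M \<Longrightarrow> (\<Sum>j<m. z j * F j t) mod q = (\<Sum>i<s. y i * a i t) mod q)
   \<Longrightarrow> lin q M m z F = lin q M s y a"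
  unfolding lin_def nrm_eq by simp

lemma lin_comp: "lin q M m z (\<lambda>j. lin q M s (x j) a) = lin q M s (\<lambda>i. \<Sum>j<m. z j * x j i) a"
proof -
  have "(\<Sum>j<m. z j * lin q M s (x j) a t) mod q = (\<Sum>i<s. (\<Sum>j<m. z j * x j i) * a i t) mod q" if t: "t < M" for t
  proof -
    have "(\<Sum>j<m. z j * lin q M s (x j) a t) mod q = (\<Sum>j<m. z j * (\<Sum>i<s. x j i * a i t)) mod q"
      by (rule sum_mod_cong) (simp add: lin_app t mod_simps)
    also have "(\<Sum>j<m. z j * (\<Sum>i<s. x j i * a i t)) = (\<Sum>i<s. (\<Sum>j<m. z j * x j i) * a i t)"
      by (simp add: sum_distrib_left sum_distrib_right mult.assoc sum.swap[of _ "{..<m}"])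
    finally show ?thesis .
  qed
  then show ?thesis by (rule lin_eqI)
qed

lemma lin_self: assumes "a j \<in> vecs q M" "j < m" shows "lin q M m (uv j) a = a j"
proof -
  have "(\<Sum>l<m. uv j l * a l t) = a j t" for t
    using sum_uv[OF assms(2), of "\<lambda>l. a l t"] by (simp add: mult.commute)
  then have "lin q M m (uv j) a = nrm q M (a j)" unfolding lin_def by simp
  then show ?thesis using nrm_id[OF assms(1)] by simp
qed

lemma lin_inj: assumes q: "q > 0" and ind: "indep q M m a" and x: "x \<in> vecs q m" and y: "y \<in> vecs q m"
  and e: "lin q M m x a = lin q M m y a" shows "x = y"
proof -
  have "lin q M m (\<lambda>j. x j - y j) a = z0" unfolding nrm_zero lin_def
  proof (intro allI impI)
    fix t assume t: "t < M"
    have "(\<Sum>j<m. x j * a j t) mod q = (\<Sum>j<m. y j * a j t) mod q" using e t by (metis lin_app)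
    then have "((\<Sum>j<m. x j * a j t) - (\<Sum>j<m. y j * a j t)) mod q = 0" by (simp add: mod_eq_dvd_iff dvd_eq_mod_eq_0[symmetric])
    then show "(\<Sum>j<m. (x j - y j) * a j t) mod q = 0" by (simp add: sum_subtractf left_diff_distrib)
  qed
  then have "\<forall>j<m. (x j - y j) mod q = 0" using ind unfolding indep_def by blast
  then have "\<forall>j<m. x j mod q = y j mod q" by (simp add: mod_eq_dvd_iff dvd_eq_mod_eq_0[symmetric])
  then show ?thesis using x y vecs_eq by blast
qed

lemma spn_img: assumes q: "q > 0" shows "spn q M m a = (\<lambda>x. lin q M m x a) ` vecs q m"
proof
  show "spn q M m a \<subseteq> (\<lambda>x. lin q M m x a) ` vecs q m"
  proof
    fix v assume "v \<in> spn q M m a"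
    then obtain x where x: "v = lin q M m x a" unfolding spn_def by auto
    then have "v = lin q M m (nrm q m x) a" using lin_nrm by metis
    then show "v \<in> (\<lambda>x. lin q M m x a) ` vecs q m" using nrm_in[OF q] by blast
  qed
  show "(\<lambda>x. lin q M m x a) ` vecs q m \<subseteq> spn q M m a" unfolding spn_def by auto
qed

lemma spn_card: assumes Q: "Q > 0" and ind: "indep (int Q) M m a"
  shows "card (spn (int Q) M m a) = Q ^ m"
proof -
  have q: "int Q > 0" using Q by simp
  have "inj_on (\<lambda>x. lin (int Q) M m x a) (vecs (int Q) m)"
    by (rule inj_onI) (rule lin_inj[OF q ind])
  then show ?thesis unfolding spn_img[OF q] by (simp add: card_image vecs_card)
qed

lemma spn_finite: "q > 0 \<Longrightarrow> finite (spn q M m a)"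
  unfolding spn_img using vecs_card(1) by simp

lemma symp_lin:
  assumes iso: "\<forall>j<m. \<forall>l<m. symp q n (a j) (a l) = 0"
  shows "symp q n (lin q (2*n) m u a) (lin q (2*n) m w a) = 0"
proof -
  define S where "S j l = (\<Sum>i<n. a j i * a l (n+i) - a j (n+i) * a l i)" for j l
  have Sd: "q dvd S j l" if "j < m" "l < m" for j l
    using iso that unfolding symp_def S_def by (simp add: dvd_eq_mod_eq_0)
  have "symp q n (lin q (2*n) m u a) (lin q (2*n) m w a) =
     (\<Sum>i<n. (\<Sum>j<m. u j * a j i) * (\<Sum>l<m. w l * a l (n+i)) - (\<Sum>j<m. u j * a j (n+i)) * (\<Sum>l<m. w l * a l i)) mod q"
    unfolding symp_def
  proof (rule sum_mod_cong)
    fix i assume "i \<in> {..<n}"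
    then have i: "i < 2*n" "n + i < 2*n" by auto
    show "(lin q (2*n) m u a i * lin q (2*n) m w a (n+i) - lin q (2*n) m u a (n+i) * lin q (2*n) m w a i) mod q
      = ((\<Sum>j<m. u j * a j i) * (\<Sum>l<m. w l * a l (n+i)) - (\<Sum>j<m. u j * a j (n+i)) * (\<Sum>l<m. w l * a l i)) mod q"
      by (rule mod_diff_cong) (simp_all add: lin_app i mod_mult_eq)
  qed
  also have "(\<Sum>i<n. (\<Sum>j<m. u j * a j i) * (\<Sum>l<m. w l * a l (n+i)) - (\<Sum>j<m. u j * a j (n+i)) * (\<Sum>l<m. w l * a l i))
     = (\<Sum>i<n. \<Sum>j<m. \<Sum>l<m. u j * w l * (a j i * a l (n+i) - a j (n+i) * a l i))"
  proof (rule sum.cong[OF refl])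
    fix i
    have p1: "(\<Sum>j<m. u j * a j i) * (\<Sum>l<m. w l * a l (n+i)) = (\<Sum>j<m. \<Sum>l<m. u j * w l * (a j i * a l (n+i)))"
      by (subst sum_product) (simp add: algebra_simps)
    have p2: "(\<Sum>j<m. u j * a j (n+i)) * (\<Sum>l<m. w l * a l i) = (\<Sum>j<m. \<Sum>l<m. u j * w l * (a j (n+i) * a l i))"
      by (subst sum_product) (simp add: algebra_simps)
    show "(\<Sum>j<m. u j * a j i) * (\<Sum>l<m. w l * a l (n+i)) - (\<Sum>j<m. u j * a j (n+i)) * (\<Sum>l<m. w l * a l i)
      = (\<Sum>j<m. \<Sum>l<m. u j * w l * (a j i * a l (n+i) - a j (n+i) * a l i))"
      unfolding p1 p2 by (simp add: sum_subtractf[symmetric] right_diff_distrib)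
  qed
  also have "\<dots> = (\<Sum>j<m. \<Sum>l<m. u j * w l * S j l)"
    unfolding S_def by (simp add: sum_distrib_left sum.swap[of _ "{..<n}"])
  also have "\<dots> mod q = 0"
  proof -
    have "q dvd (\<Sum>j<m. \<Sum>l<m. u j * w l * S j l)"
      by (intro dvd_sum dvd_mult) (use Sd in auto)
    then show ?thesis by (simp add: dvd_eq_mod_eq_0)
  qed
  finally show ?thesis .
qed



lemma fiber_card:
  fixes Q :: nat
  assumes Q: "Q > 1" and a0: "a0 \<in> TT Q n s"
  shows "card {a \<in> TT Q n s. spn (int Q) (2*n) s a = spn (int Q) (2*n) s a0} = card (GG Q s s)"
proof -
  define q where "q = int Q"
  define M where "M = 2*n"
  have q: "q > 0" "q > 1" using Q unfolding q_def by auto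
  have a0v: "\<forall>i<s. a0 i \<in> vecs q M" and a0z: "\<forall>i\<ge>s. a0 i = z0" and a0i: "indep q M s a0"
    and a0s: "\<forall>i<s. \<forall>l<s. symp q n (a0 i) (a0 l) = 0"
    using a0 unfolding TT_def q_def M_def by auto
  define Fm where "Fm x = (\<lambda>j. if j < s then lin q M s (x j) a0 else z0)" for x
  have linF: "lin q M s z (Fm x) = lin q M s (\<lambda>i. \<Sum>j<s. z j * x j i) a0" for z x
  proof -
    have "lin q M s z (Fm x) = lin q M s z (\<lambda>j. lin q M s (x j) a0)"
      unfolding Fm_def by (rule lin_cong) simp
    also have "\<dots> = lin q M s (\<lambda>i. \<Sum>j<s. z j * x j i) a0" by (rule lin_comp)
    finally show ?thesis .
  qed
  have lin0: "lin q M s y a0 = z0" if "\<forall>i<s. y i mod q = 0" for y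
  proof -
    have "nrm q s y = z0" using that unfolding nrm_zero by simp
    then have "lin q M s y a0 = lin q M s z0 a0" using lin_nrm by metis
    also have "\<dots> = z0" unfolding lin_def nrm_zero by simp
    finally show ?thesis .
  qed
  have spn0: "card (spn q M s a0) = Q ^ s" unfolding q_def by (rule spn_card) (use Q a0i q_def in auto)
  have F1: "Fm x \<in> {a \<in> TT Q n s. spn q M s a = spn q M s a0}" if x: "x \<in> GG Q s s" for x
  proof -
    have xv: "\<forall>i<s. x i \<in> vecs q s" and xi: "indep q s s x" using x unfolding GG_def q_def by auto
    have v: "\<forall>i<s. Fm x i \<in> vecs q M" unfolding Fm_def using lin_in[OF q(1)] by simp
    have z: "\<forall>i\<ge>s. Fm x i = z0" unfolding Fm_def by simp
    have ind: "indep q M s (Fm x)" unfolding indep_def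
    proof (rule allI, rule impI)
      fix z assume "lin q M s z (Fm x) = z0"
      then have "lin q M s (\<lambda>i. \<Sum>j<s. z j * x j i) a0 = z0" using linF by simp
      then have "\<forall>i<s. (\<Sum>j<s. z j * x j i) mod q = 0" using a0i unfolding indep_def by blast
      then have "lin q s s z x = z0" unfolding lin_def nrm_zero by simp
      then show "\<forall>j<s. z j mod q = 0" using xi unfolding indep_def by blast
    qed
    have iso: "\<forall>i<s. \<forall>l<s. symp q n (Fm x i) (Fm x l) = 0"
      unfolding Fm_def M_def using symp_lin[OF a0s] by simp
    have "spn q M s (Fm x) \<subseteq> spn q M s a0" unfolding spn_def using linF by auto
    moreover have "card (spn q M s (Fm x)) = Q ^ s" unfolding q_def by (rule spn_card) (use Q ind q_def in auto)
    ultimately have "spn q M s (Fm x) = spn q M s a0"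
      using spn0 card_subset_eq[OF spn_finite[OF q(1)]] by metis
    then show ?thesis using v z ind iso unfolding TT_def q_def M_def by auto
  qed
  have F2: "inj_on Fm (GG Q s s)"
  proof (rule inj_onI)
    fix x x' assume x: "x \<in> GG Q s s" and x': "x' \<in> GG Q s s" and e: "Fm x = Fm x'"
    show "x = x'"
    proof
      fix j show "x j = x' j"
      proof (cases "j < s")
        case True
        have "lin q M s (x j) a0 = lin q M s (x' j) a0" using e True unfolding Fm_def by (metis (full_types))
        then show ?thesis using lin_inj[OF q(1) a0i] x x' True unfolding GG_def q_def by auto
      next
        case False then show ?thesis using x x' unfolding GG_def by auto
      qed
    qed
  qed
  have F3: "{a \<in> TT Q n s. spn q M s a = spn q M s a0} \<subseteq> Fm ` GG Q s s"
  proof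
    fix a assume a: "a \<in> {a \<in> TT Q n s. spn q M s a = spn q M s a0}"
    have av: "\<forall>i<s. a i \<in> vecs q M" and az: "\<forall>i\<ge>s. a i = z0" and ai: "indep q M s a"
      and asp: "spn q M s a = spn q M s a0" using a unfolding TT_def q_def M_def by auto
    have ex: "\<exists>y. a j = lin q M s y a0" if j: "j < s" for j
    proof -
      have "a j = lin q M s (uv j) a" using lin_self av j by metis
      then have "a j \<in> spn q M s a0" using asp unfolding spn_def by auto
      then show ?thesis unfolding spn_def by auto
    qed
    define x where "x j = (if j < s then nrm q s (SOME y. a j = lin q M s y a0) else z0)" for j
    have Fx: "Fm x = a"
    proof
      fix j show "Fm x j = a j"
      proof (cases "j < s")
        case True
        have "Fm x j = lin q M s (SOME y. a j = lin q M s y a0) a0"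
          unfolding Fm_def x_def using True lin_nrm by simp
        also have "\<dots> = a j" using someI_ex[OF ex[OF True]] by simp
        finally show ?thesis .
      next
        case False then show ?thesis unfolding Fm_def using az by simp
      qed
    qed
    have "indep q s s x" unfolding indep_def
    proof (rule allI, rule impI)
      fix z assume "lin q s s z x = z0"
      then have "\<forall>i<s. (\<Sum>j<s. z j * x j i) mod q = 0" unfolding lin_def nrm_zero by simp
      then have "lin q M s (\<lambda>i. \<Sum>j<s. z j * x j i) a0 = z0" by (rule lin0)
      then have "lin q M s z a = z0" using linF Fx by metis
      then show "\<forall>j<s. z j mod q = 0" using ai unfolding indep_def by blast
    qed
    then have "x \<in> GG Q s s" unfolding GG_def x_def q_def using nrm_in[OF q(1)] by (auto simp: q_def)
    then show "a \<in> Fm ` GG Q s s" using Fx by blast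
  qed
  have "{a \<in> TT Q n s. spn q M s a = spn q M s a0} = Fm ` GG Q s s" using F1 F3 by blast
  then show ?thesis using F2 card_image unfolding q_def M_def by metis
qed

lemma zvec_eq: "zvec q n = vecs q (2*n)" unfolding zvec_def vecs_def by simp
lemma lincomb_eq: "lincomb q n m x a = lin q (2*n) m x a" unfolding lincomb_def lin_def nrm_def by simp
lemma zindep_eq: "zindep q n m a = indep q (2*n) m a" unfolding zindep_def indep_def lincomb_eq ..
lemma zspan_eq: "zspan q n m a = spn q (2*n) m a" unfolding zspan_def spn_def lincomb_eq ..

lemma codes_img: "stab_codes n k (int Q) = spn (int Q) (2*n) (n-k) ` TT Q n (n-k)"
proof (rule set_eqI, rule iffI)
  fix C assume "C \<in> stab_codes n k (int Q)"
  then obtain a where a: "\<forall>j<n-k. a j \<in> vecs (int Q) (2*n)" "indep (int Q) (2*n) (n-k) a"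
    "\<forall>j<n-k. \<forall>l<n-k. symp (int Q) n (a j) (a l) = 0" "C = spn (int Q) (2*n) (n-k) a"
    unfolding stab_codes_def zvec_eq zindep_eq zspan_eq by auto
  define a' where "a' j = (if j < n-k then a j else z0)" for j
  have c: "\<And>i. i < n-k \<Longrightarrow> a' i = a i" unfolding a'_def by simp
  have "indep (int Q) (2*n) (n-k) a'" using a(2) indep_cong[of "n-k" a' a] c by simp
  then have "a' \<in> TT Q n (n-k)" using a c unfolding TT_def by (auto simp: a'_def)
  moreover have "C = spn (int Q) (2*n) (n-k) a'" using a(4) lin_cong[of "n-k" a' a] c unfolding spn_def by simp
  ultimately show "C \<in> spn (int Q) (2*n) (n-k) ` TT Q n (n-k)" by blast
next
  fix C assume "C \<in> spn (int Q) (2*n) (n-k) ` TT Q n (n-k)"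
  then obtain a where "a \<in> TT Q n (n-k)" "C = spn (int Q) (2*n) (n-k) a" by auto
  then show "C \<in> stab_codes n k (int Q)"
    unfolding stab_codes_def zvec_eq zindep_eq zspan_eq TT_def by blast
qed

lemma codes_count:
  fixes Q :: nat assumes Q: "Q > 1"
  shows "card (TT Q n (n-k)) = card (stab_codes n k (int Q)) * card (GG Q (n-k) (n-k))"
proof -
  let ?s = "n-k"
  let ?f = "spn (int Q) (2*n) ?s"
  let ?T = "TT Q n ?s"
  have "?T = (\<Union>C\<in>?f ` ?T. {a\<in>?T. ?f a = C})" by auto
  moreover have "card (\<Union>C\<in>?f ` ?T. {a\<in>?T. ?f a = C}) = (\<Sum>C\<in>?f ` ?T. card {a\<in>?T. ?f a = C})"
    using TT_finite by (intro card_UN_disjoint) auto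
  ultimately have "card ?T = (\<Sum>C\<in>?f ` ?T. card {a\<in>?T. ?f a = C})" by simp
  also have "\<dots> = (\<Sum>C\<in>?f ` ?T. card (GG Q ?s ?s))"
  proof (rule sum.cong[OF refl])
    fix C assume "C \<in> ?f ` ?T"
    then obtain a0 where a0: "a0 \<in> ?T" "C = ?f a0" by auto
    show "card {a\<in>?T. ?f a = C} = card (GG Q ?s ?s)" unfolding a0(2) by (rule fiber_card[OF Q a0(1)])
  qed
  also have "\<dots> = card (?f ` ?T) * card (GG Q ?s ?s)" by simp
  finally show ?thesis unfolding codes_img .
qed



definition Dx :: "nat \<Rightarrow> nat \<Rightarrow> nat" where "Dx n k = (\<Sum>j<n-k. n + k - j)"
definition Zf :: "nat \<Rightarrow> nat \<Rightarrow> nat \<Rightarrow> real" where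
  "Zf n k p = (\<Prod>j<n-k. (1 - 1 / real p ^ (2*(n-j))) / (1 - 1 / real p ^ (n-k-j)))"

lemma Dx_double: fixes s k :: nat shows "2 * (\<Sum>j<s. s + 2*k - j) = s * (s + 4*k + 1)"
proof (induction s)
  case 0 then show ?case by simp
next
  case (Suc s)
  have "(\<Sum>j<Suc s. Suc s + 2*k - j) = (\<Sum>j<s. Suc s + 2*k - j) + (2*k + 1)" by simp
  also have "(\<Sum>j<s. Suc s + 2*k - j) = (\<Sum>j<s. (s + 2*k - j) + 1)"
    by (rule sum.cong) auto
  also have "\<dots> = (\<Sum>j<s. s + 2*k - j) + (\<Sum>j<s. 1)" by (rule sum.distrib)
  also have "(\<Sum>j<s. (1::nat)) = s" by simp
  finally have "2 * (\<Sum>j<Suc s. Suc s + 2*k - j) = 2 * (\<Sum>j<s. s + 2*k - j) + 2 * s + 4*k + 2" by simp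
  then show ?case using Suc by (simp add: algebra_simps)
qed

lemma Dx_eq: assumes "k < n" shows "2 * Dx n k = (n-k) * (n + 3*k + 1)"
proof -
  have e: "(n-k) + 2*k = n + k" using assms by simp
  have "2 * Dx n k = 2 * (\<Sum>j<n-k. (n-k) + 2*k - j)" unfolding Dx_def e ..
  then have "2 * Dx n k = (n-k) * ((n-k) + 4*k + 1)" using Dx_double[of "n-k" k] by linarith
  also have "(n-k) + 4*k + 1 = n + 3*k + 1" using assms by simp
  finally show ?thesis .
qed

lemma Ncodes_formula:
  fixes Q :: nat assumes Q: "Q > 1" and kn: "k < n"
  shows "real (Ncodes n k Q) = real Q ^ Dx n k * (\<Prod>p\<in>prime_factors Q. Zf n k p)"
proof -
  let ?s = "n-k"
  let ?P = "\<lambda>t. (\<Prod>p\<in>prime_factors Q. (1 - 1 / real p ^ t))"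
  have Ppos: "?P t > 0" if "t > 0" for t
  proof (rule prod_pos)
    fix p assume "p \<in> prime_factors Q"
    then have "prime p" by (simp add: in_prime_factors_iff)
    then have "p > 1" by (rule prime_gt_1_nat)
    then have "real p > 1" by simp
    then have "real p ^ t > 1" using that by (simp add: one_less_power)
    then have "1 / real p ^ t < 1" by (simp add: divide_less_eq)
    then show "1 - 1 / real p ^ t > 0" by simp
  qed
  have T: "real (card (TT Q n ?s)) = (\<Prod>j<?s. real Q ^ j * (real Q ^ (2*n - j - j) * ?P (2*n - j - j)))"
    by (rule TT_card[OF Q]) simp
  have G: "real (card (GG Q ?s ?s)) = (\<Prod>j<?s. real Q ^ j * (real Q ^ (?s - j) * ?P (?s - j)))"
    by (rule GG_card[OF Q]) simp
  have Gpos: "real (card (GG Q ?s ?s)) > 0" unfolding G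
    using Q Ppos by (intro prod_pos) (auto intro!: mult_pos_pos)
  have C: "real (card (TT Q n ?s)) = real (Ncodes n k Q) * real (card (GG Q ?s ?s))"
    using codes_count[OF Q, of n k] unfolding Ncodes_def by simp
  have "real (Ncodes n k Q) = real (card (TT Q n ?s)) / real (card (GG Q ?s ?s))"
    using C Gpos by (simp add: field_simps)
  also have "\<dots> = (\<Prod>j<?s. (real Q ^ j * (real Q ^ (2*n - j - j) * ?P (2*n - j - j))) /
       (real Q ^ j * (real Q ^ (?s - j) * ?P (?s - j))))"
    unfolding T G by (rule prod_dividef[symmetric])
  also have "\<dots> = (\<Prod>j<?s. real Q ^ (n + k - j) * (?P (2*(n-j)) / ?P (n-k-j)))"
  proof (rule prod.cong[OF refl])
    fix j assume j: "j \<in> {..<?s}"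
    have e: "2*n - j - j = (n + k - j) + (?s - j)" "2*n - j - j = 2*(n-j)" using j kn by auto
    have "real Q ^ (2*n - j - j) = real Q ^ (n + k - j) * real Q ^ (?s - j)" unfolding e(1) by (simp add: power_add)
    moreover have "real Q ^ j > 0" "real Q ^ (?s - j) > 0" "?P (?s - j) > 0" using Q Ppos j by auto
    ultimately show "(real Q ^ j * (real Q ^ (2*n - j - j) * ?P (2*n - j - j))) /
       (real Q ^ j * (real Q ^ (?s - j) * ?P (?s - j))) = real Q ^ (n + k - j) * (?P (2*(n-j)) / ?P (n-k-j))"
      unfolding e(2) using j Q by (simp add: field_simps)
  qed
  also have "\<dots> = real Q ^ Dx n k * (\<Prod>j<?s. ?P (2*(n-j)) / ?P (n-k-j))"
    unfolding Dx_def by (simp only: power_sum prod.distrib[symmetric])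
  also have "(\<Prod>j<?s. ?P (2*(n-j)) / ?P (n-k-j)) = (\<Prod>p\<in>prime_factors Q. Zf n k p)"
    unfolding Zf_def by (simp add: prod_dividef[symmetric] prod.swap[of _ "prime_factors Q"])
  finally show ?thesis .
qed



lemma pf_prime_power: assumes "prime p" "m > 0" shows "prime_factors (p ^ m) = {p}"
proof (rule set_eqI, rule iffI)
  fix r assume "r \<in> prime_factors (p ^ m)"
  then have "prime r" "r dvd p ^ m" by (auto simp: in_prime_factors_iff)
  then have "r dvd p" using prime_dvd_power by metis
  then show "r \<in> {p}" using primes_dvd_imp_eq \<open>prime r\<close> assms(1) by auto
next
  fix r assume "r \<in> {p}"
  then show "r \<in> prime_factors (p ^ m)" using assms by (auto simp: in_prime_factors_iff prime_gt_0_nat)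
qed

lemma powr_conv: "real p > 0 \<Longrightarrow> real p powr (- real t) = 1 / real p ^ t"
  by (simp add: powr_minus powr_realpow divide_inverse)

theorem theorem2:
  fixes d n k :: nat
  assumes "d \<ge> 2" and "n \<ge> 1" and "k < n"
  shows "Ncodes n k d = (\<Prod>p\<in>prime_factors d. Ncodes n k (p ^ multiplicity p d))
    \<and> real (Ncodes n k d) =
        real d powr (real ((n-k) * (n + 3*k + 1)) / 2)
        * (\<Prod>p\<in>prime_factors d. \<Prod>j<n-k.
             (1 - real p powr (- real (2*(n-j)))) / (1 - real p powr (- real (n-k-j))))"
proof
  have d1: "d > 1" using assms(1) by simp
  have F: "real (Ncodes n k d) = real d ^ Dx n k * (\<Prod>p\<in>prime_factors d. Zf n k p)"
    by (rule Ncodes_formula[OF d1 assms(3)])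
  have pp: "p > 1" "multiplicity p d > 0" if "p \<in> prime_factors d" for p
    using that d1 prime_gt_1_nat by (auto simp: prime_factors_multiplicity)
  have Fp: "real (Ncodes n k (p ^ multiplicity p d)) = (real p ^ multiplicity p d) ^ Dx n k * Zf n k p"
    if p: "p \<in> prime_factors d" for p
  proof -
    have pr: "prime p" using p by (simp add: in_prime_factors_iff)
    have "p ^ multiplicity p d > 1" using pp[OF p] by (metis one_less_power)
    then have "real (Ncodes n k (p ^ multiplicity p d)) = real (p ^ multiplicity p d) ^ Dx n k *
       (\<Prod>r\<in>prime_factors (p ^ multiplicity p d). Zf n k r)"
      by (rule Ncodes_formula[OF _ assms(3)])
    then show ?thesis using pf_prime_power[OF pr pp(2)[OF p]] by simp
  qed
  have dprod: "real d = (\<Prod>p\<in>prime_factors d. real p ^ multiplicity p d)"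
  proof -
    have "d = (\<Prod>p\<in>prime_factors d. p ^ multiplicity p d)" using d1 prime_factorization_nat by simp
    then have "real d = real (\<Prod>p\<in>prime_factors d. p ^ multiplicity p d)" by simp
    then show ?thesis by simp
  qed
  have "real (\<Prod>p\<in>prime_factors d. Ncodes n k (p ^ multiplicity p d))
      = (\<Prod>p\<in>prime_factors d. (real p ^ multiplicity p d) ^ Dx n k * Zf n k p)"
    by (simp only: of_nat_prod) (rule prod.cong[OF refl Fp])
  also have "\<dots> = (\<Prod>p\<in>prime_factors d. real p ^ multiplicity p d) ^ Dx n k * (\<Prod>p\<in>prime_factors d. Zf n k p)"
    by (simp add: prod.distrib prod_power_distrib)
  also have "\<dots> = real (Ncodes n k d)" using F dprod by simp
  finally show "Ncodes n k d = (\<Prod>p\<in>prime_factors d. Ncodes n k (p ^ multiplicity p d))"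
    by (simp only: of_nat_eq_iff)
  have ex: "real ((n-k) * (n + 3*k + 1)) / 2 = real (Dx n k)"
    using Dx_eq[OF assms(3)] by (metis nonzero_mult_div_cancel_left of_nat_mult of_nat_numeral zero_neq_numeral)
  have pw: "real d powr (real ((n-k) * (n + 3*k + 1)) / 2) = real d ^ Dx n k"
    unfolding ex using d1 by (simp add: powr_realpow)
  have Z: "(\<Prod>p\<in>prime_factors d. \<Prod>j<n-k.
             (1 - real p powr (- real (2*(n-j)))) / (1 - real p powr (- real (n-k-j))))
       = (\<Prod>p\<in>prime_factors d. Zf n k p)"
  proof (rule prod.cong[OF refl])
    fix p assume p: "p \<in> prime_factors d"
    then have "p > 1" using pp by blast
    then have pos: "real p > 0" by simp
    show "(\<Prod>j<n-k. (1 - real p powr (- real (2*(n-j)))) / (1 - real p powr (- real (n-k-j)))) = Zf n k p"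
      unfolding Zf_def powr_conv[OF pos] ..
  qed
  show "real (Ncodes n k d) = real d powr (real ((n-k) * (n + 3*k + 1)) / 2)
        * (\<Prod>p\<in>prime_factors d. \<Prod>j<n-k.
             (1 - real p powr (- real (2*(n-j)))) / (1 - real p powr (- real (n-k-j))))"
    unfolding pw Z by (rule F)
qed


end
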